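(* Let $k$ be a field of characteristic $p>0$ (residue field of a complete discrete valuation ring $\mathcal{O}$ of characteristic $0$). Let $G$ be a finite group, $N$ a normal subgroup of $G$, and $Q$ a $p$-subgroup of $G$. Let $K=\{\varphi\in\operatorname{Aut}(Q)\mid \varphi(u)\in uN\text{ for all }u\in Q\}$ and let $N_G^K(Q)=\{x\in N_G(Q)\mid \varphi_x\in K\}$, where $\varphi_x(u)=xux^{-1}$. Then there exists an isomorphism \[\psi^K: kN_G^K(Q)\longrightarrow \bar N^K_{kG}(Q)\] of $N_G^K(Q)/C_N(Q)$-graded $N_G^K(Q)$-interior $N_G(Q)$-algebras.
   Context: For $\varphi\in K$ let $\Delta_\varphi(Q)=\{(\varphi(u),u)\mid u\in Q\}\le Q\times Q$, acting on $\mathcal{O}G$ by $(v,u)\cdot a=vau^{-1}$. Let $(\mathcal{O}G)^{\Delta_\varphi(Q)}$ be the fixed points and $\bar N^\varphi_{kG}(Q)=(\mathcal{O}G)(\Delta_\varphi(Q))$ the Brauer quotient, i.e. the quotient of $(\mathcal{O}G)^{\Delta_\varphi(Q)}$ by $\sum_{R<\Delta_\varphi(Q)}\operatorname{Tr}_R^{\Delta_\varphi(Q)}((\mathcal{O}G)^R)+\mathrm{J}(\mathcal{O})(\mathcal{O}G)^{\Delta_\varphi(Q)}$, with canonical map $\operatorname{Br}_{\Delta_\varphi(Q)}$. The extended Brauer quotient is $\bar N^K_{kG}(Q)=\bigoplus_{\varphi\in K}\bar N^\varphi_{kG}(Q)$, with multiplication $\operatorname{Br}_{\Delta_\varphi(Q)}(a)\operatorname{Br}_{\Delta_\psi(Q)}(c)=\operatorname{Br}_{\Delta_{\varphi\psi}(Q)}(ac)$.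 It is $N_G^K(Q)$-interior via $x\mapsto\operatorname{Br}_{\Delta_{\varphi_x}(Q)}(x)$, and an $N_G(Q)$-algebra via $y\in N_G(Q)$ sending $\operatorname{Br}_{\Delta_\varphi(Q)}(a)$ to $\operatorname{Br}_{\Delta_{\varphi^y}(Q)}(y^{-1}ay)$, where $\varphi^y(u)=y^{-1}\varphi(yuy^{-1})y$. Its $N_G^K(Q)/C_N(Q)$-grading: the component of degree $zC_N(Q)$ ($z\in N_G^K(Q)$) is $\operatorname{Br}_{\Delta_{\varphi_z}(Q)}\big((\mathcal{O}Nz)^{\Delta_{\varphi_z}(Q)}\big)$. The group algebra $kN_G^K(Q)$ is $N_G^K(Q)/C_N(Q)$-graded with component $kC_N(Q)z$ in degree $zC_N(Q)$, is $N_G^K(Q)$-interior via the inclusion, and is an $N_G(Q)$-algebra via conjugation ($N_G^K(Q)$ is normal in $N_G(Q)$). *)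

theory Defs
  imports "HOL-Algebra.Group_Action" "HOL-Algebra.Bij" "HOL-Computational_Algebra.Primes"
begin

definition jac_rad :: "'o::comm_ring_1 set" where
  "jac_rad = {j. \<forall>x. (1 - x * j) dvd 1}"

definition complete_dvr :: "'o::idom itself \<Rightarrow> bool" where
  "complete_dvr _ \<longleftrightarrow> (\<exists>pi::'o. pi \<noteq> 0 \<and> \<not> pi dvd 1 \<and>
      (\<forall>x. x \<noteq> 0 \<longrightarrow> (\<exists>u n. u dvd 1 \<and> x = u * pi ^ n)) \<and>
      (\<forall>s::nat \<Rightarrow> 'o. (\<forall>n. pi ^ n dvd (s (Suc n) - s n)) \<longrightarrow>
          (\<exists>a. \<forall>n. pi ^ n dvd (a - s n))))"

definition residue_map :: "('o::comm_ring_1 \<Rightarrow> 'k::field) \<Rightarrow> bool" where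
  "residue_map res \<longleftrightarrow> res 1 = 1 \<and> (\<forall>a b. res (a + b) = res a + res b) \<and>
      (\<forall>a b. res (a * b) = res a * res b) \<and> surj res \<and> {a. res a = 0} = jac_rad"

definition conj_aut :: "('g, 'b) monoid_scheme \<Rightarrow> 'g \<Rightarrow> 'g set \<Rightarrow> ('g \<Rightarrow> 'g)" where
  "conj_aut G x Q = (\<lambda>u\<in>Q. x \<otimes>\<^bsub>G\<^esub> u \<otimes>\<^bsub>G\<^esub> inv\<^bsub>G\<^esub> x)"

definition Kgrp :: "('g, 'b) monoid_scheme \<Rightarrow> 'g set \<Rightarrow> 'g set \<Rightarrow> ('g \<Rightarrow> 'g) set" where
  "Kgrp G N Q = {\<phi> \<in> auto (G\<lparr>carrier := Q\<rparr>). \<forall>u\<in>Q. \<phi> u \<in> u <#\<^bsub>G\<^esub> N}"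

definition NK :: "('g, 'b) monoid_scheme \<Rightarrow> 'g set \<Rightarrow> 'g set \<Rightarrow> 'g set" where
  "NK G N Q = {x \<in> normalizer G Q. conj_aut G x Q \<in> Kgrp G N Q}"

definition CN :: "('g, 'b) monoid_scheme \<Rightarrow> 'g set \<Rightarrow> 'g set \<Rightarrow> 'g set" where
  "CN G N Q = {x \<in> N. \<forall>u\<in>Q. x \<otimes>\<^bsub>G\<^esub> u = u \<otimes>\<^bsub>G\<^esub> x}"

definition phi_conj :: "('g, 'b) monoid_scheme \<Rightarrow> 'g set \<Rightarrow> 'g \<Rightarrow> ('g \<Rightarrow> 'g) \<Rightarrow> ('g \<Rightarrow> 'g)" where
  "phi_conj G Q y \<phi> = (\<lambda>u\<in>Q. inv\<^bsub>G\<^esub> y \<otimes>\<^bsub>G\<^esub> \<phi> (y \<otimes>\<^bsub>G\<^esub> u \<otimes>\<^bsub>G\<^esub> inv\<^bsub>G\<^esub> y) \<otimes>\<^bsub>G\<^esub> y)"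

definition OG :: "('g, 'b) monoid_scheme \<Rightarrow> ('g \<Rightarrow> 'o::comm_ring_1) set" where
  "OG G = {a. \<forall>g. g \<notin> carrier G \<longrightarrow> a g = 0}"

definition gdelta :: "'g \<Rightarrow> ('g \<Rightarrow> 'r::comm_ring_1)" where
  "gdelta x = (\<lambda>g. if g = x then 1 else 0)"

definition gconv :: "('g, 'b) monoid_scheme \<Rightarrow> ('g \<Rightarrow> 'o::comm_ring_1) \<Rightarrow> ('g \<Rightarrow> 'o) \<Rightarrow> ('g \<Rightarrow> 'o)" where
  "gconv G a c = (\<lambda>x. if x \<in> carrier G then (\<Sum>y\<in>carrier G. a y * c (inv\<^bsub>G\<^esub> y \<otimes>\<^bsub>G\<^esub> x)) else 0)"

text \<open>(v,u) . a = v a u^-1, i.e. the coefficient at g is a(v^-1 g u).\<close>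
definition biact :: "('g, 'b) monoid_scheme \<Rightarrow> 'g \<times> 'g \<Rightarrow> ('g \<Rightarrow> 'o::comm_ring_1) \<Rightarrow> ('g \<Rightarrow> 'o)" where
  "biact G vu a = (\<lambda>g. if g \<in> carrier G
      then a (inv\<^bsub>G\<^esub> (fst vu) \<otimes>\<^bsub>G\<^esub> g \<otimes>\<^bsub>G\<^esub> snd vu) else 0)"

definition Delta :: "('g \<Rightarrow> 'g) \<Rightarrow> 'g set \<Rightarrow> ('g \<times> 'g) set" where
  "Delta \<phi> Q = {(\<phi> u, u) | u. u \<in> Q}"

definition fixpts :: "('g, 'b) monoid_scheme \<Rightarrow> ('g \<times> 'g) set \<Rightarrow> ('g \<Rightarrow> 'o::comm_ring_1) set" where
  "fixpts G R = {a \<in> OG G. \<forall>r\<in>R. biact G r a = a}"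

definition trace :: "('g, 'b) monoid_scheme \<Rightarrow> ('g \<times> 'g) set \<Rightarrow> ('g \<times> 'g) set
    \<Rightarrow> ('g \<Rightarrow> 'o::comm_ring_1) \<Rightarrow> ('g \<Rightarrow> 'o)" where
  "trace G D R a = (\<lambda>g. \<Sum>C\<in>{t <#\<^bsub>G \<times>\<times> G\<^esub> R | t. t \<in> D}. biact G (SOME t. t \<in> C) a g)"

definition lin_span :: "('g \<Rightarrow> 'o::comm_ring_1) set \<Rightarrow> ('g \<Rightarrow> 'o) set" where
  "lin_span S = {(\<lambda>x. \<Sum>a\<in>T. r a * a x) | T r. finite T \<and> T \<subseteq> S}"

text \<open>The kernel of Br_{Delta_phi(Q)}: sum of the Tr_R^Delta((OG)^R), R < Delta,
  plus J(O) (OG)^Delta.\<close>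
definition brauer_ker :: "('g, 'b) monoid_scheme \<Rightarrow> 'g set \<Rightarrow> ('g \<Rightarrow> 'g) \<Rightarrow> ('g \<Rightarrow> 'o::comm_ring_1) set" where
  "brauer_ker G Q \<phi> = lin_span
     ((\<Union>R\<in>{R. subgroup R (G \<times>\<times> G) \<and> R \<subset> Delta \<phi> Q}. trace G (Delta \<phi> Q) R ` fixpts G R)
      \<union> {(\<lambda>g. j * a g) | j a. j \<in> jac_rad \<and> a \<in> fixpts G (Delta \<phi> Q)})"

definition br_fam :: "('g, 'b) monoid_scheme \<Rightarrow> 'g set \<Rightarrow> 'g set
    \<Rightarrow> (('g \<Rightarrow> 'g) \<Rightarrow> ('g \<Rightarrow> 'o::comm_ring_1)) set" where
  "br_fam G N Q = {F. \<forall>\<phi>\<in>Kgrp G N Q. F \<phi> \<in> fixpts G (Delta \<phi> Q)}"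

text \<open>The element (Br_{Delta_phi(Q)}(F phi))_{phi in K} of the direct sum; each Brauer class is
  represented as the coset F phi + ker.\<close>
definition br_cls :: "('g, 'b) monoid_scheme \<Rightarrow> 'g set \<Rightarrow> 'g set
    \<Rightarrow> (('g \<Rightarrow> 'g) \<Rightarrow> ('g \<Rightarrow> 'o::comm_ring_1)) \<Rightarrow> (('g \<Rightarrow> 'g) \<Rightarrow> ('g \<Rightarrow> 'o) set)" where
  "br_cls G N Q F = (\<lambda>\<phi>. if \<phi> \<in> Kgrp G N Q
      then {(\<lambda>g. F \<phi> g + i g) | i. i \<in> brauer_ker G Q \<phi>} else {})"

definition ext_brauer :: "('g, 'b) monoid_scheme \<Rightarrow> 'g set \<Rightarrow> 'g set
    \<Rightarrow> (('g \<Rightarrow> 'g) \<Rightarrow> ('g \<Rightarrow> 'o::comm_ring_1) set) set" where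
  "ext_brauer G N Q = br_cls G N Q ` br_fam G N Q"

text \<open>Product on representatives: Br_phi(a) Br_psi(c) = Br_{phi psi}(a c).\<close>
definition fam_mult :: "('g, 'b) monoid_scheme \<Rightarrow> 'g set \<Rightarrow> 'g set
    \<Rightarrow> (('g \<Rightarrow> 'g) \<Rightarrow> ('g \<Rightarrow> 'o::comm_ring_1)) \<Rightarrow> (('g \<Rightarrow> 'g) \<Rightarrow> ('g \<Rightarrow> 'o))
    \<Rightarrow> (('g \<Rightarrow> 'g) \<Rightarrow> ('g \<Rightarrow> 'o))" where
  "fam_mult G N Q F H = (\<lambda>\<phi> x. \<Sum>(\<chi>, \<omega>)\<in>{(\<chi>, \<omega>). \<chi> \<in> Kgrp G N Q \<and> \<omega> \<in> Kgrp G N Q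
        \<and> compose Q \<chi> \<omega> = \<phi>}. gconv G (F \<chi>) (H \<omega>) x)"

text \<open>Action of y in N_G(Q): Br_phi(a) goes to Br_{phi^y}(y^-1 a y); on representatives
  the new family at chi is y^-1 F(chi^{y^-1}) y.\<close>
definition fam_act :: "('g, 'b) monoid_scheme \<Rightarrow> 'g set \<Rightarrow> 'g
    \<Rightarrow> (('g \<Rightarrow> 'g) \<Rightarrow> ('g \<Rightarrow> 'o::comm_ring_1)) \<Rightarrow> (('g \<Rightarrow> 'g) \<Rightarrow> ('g \<Rightarrow> 'o))" where
  "fam_act G Q y F = (\<lambda>\<chi> g. if g \<in> carrier G
      then F (phi_conj G Q (inv\<^bsub>G\<^esub> y) \<chi>) (y \<otimes>\<^bsub>G\<^esub> g \<otimes>\<^bsub>G\<^esub> inv\<^bsub>G\<^esub> y) else 0)"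

text \<open>Homogeneous component of degree z C_N(Q) of the extended Brauer quotient:
  Br_{Delta_{phi_z}(Q)}((O N z)^{Delta_{phi_z}(Q)}) placed in the summand phi_z.\<close>
definition ext_brauer_comp :: "('g, 'b) monoid_scheme \<Rightarrow> 'g set \<Rightarrow> 'g set \<Rightarrow> 'g
    \<Rightarrow> (('g \<Rightarrow> 'g) \<Rightarrow> ('g \<Rightarrow> 'o::comm_ring_1) set) set" where
  "ext_brauer_comp G N Q z = {br_cls G N Q F | F. F \<in> br_fam G N Q
      \<and> (\<forall>\<phi>. \<phi> \<noteq> conj_aut G z Q \<longrightarrow> F \<phi> = (\<lambda>_. 0))
      \<and> (\<forall>g. g \<notin> N #>\<^bsub>G\<^esub> z \<longrightarrow> F (conj_aut G z Q) g = 0)}"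

definition kNK :: "('g, 'b) monoid_scheme \<Rightarrow> 'g set \<Rightarrow> 'g set \<Rightarrow> ('g \<Rightarrow> 'k::field) set" where
  "kNK G N Q = {f. \<forall>x. x \<notin> NK G N Q \<longrightarrow> f x = 0}"

definition kconv :: "('g, 'b) monoid_scheme \<Rightarrow> 'g set \<Rightarrow> 'g set
    \<Rightarrow> ('g \<Rightarrow> 'k::field) \<Rightarrow> ('g \<Rightarrow> 'k) \<Rightarrow> ('g \<Rightarrow> 'k)" where
  "kconv G N Q f h = (\<lambda>x. if x \<in> NK G N Q
      then (\<Sum>y\<in>NK G N Q. f y * h (inv\<^bsub>G\<^esub> y \<otimes>\<^bsub>G\<^esub> x)) else 0)"

text \<open>Conjugation action of y: y^-1 f y, coefficient at x is f(y x y^-1).\<close>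
definition kact :: "('g, 'b) monoid_scheme \<Rightarrow> 'g set \<Rightarrow> 'g set \<Rightarrow> 'g
    \<Rightarrow> ('g \<Rightarrow> 'k::field) \<Rightarrow> ('g \<Rightarrow> 'k)" where
  "kact G N Q y f = (\<lambda>x. if x \<in> NK G N Q then f (y \<otimes>\<^bsub>G\<^esub> x \<otimes>\<^bsub>G\<^esub> inv\<^bsub>G\<^esub> y) else 0)"

definition kNK_comp :: "('g, 'b) monoid_scheme \<Rightarrow> 'g set \<Rightarrow> 'g set \<Rightarrow> 'g \<Rightarrow> ('g \<Rightarrow> 'k::field) set" where
  "kNK_comp G N Q z = {f \<in> kNK G N Q. \<forall>x. x \<notin> CN G N Q #>\<^bsub>G\<^esub> z \<longrightarrow> f x = 0}"

end

theory Submission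
  imports Defs "HOL-Algebra.Left_Coset"
begin


context fixes res :: "'o::comm_ring_1 \<Rightarrow> 'k::field" assumes res: "residue_map res"
begin
lemma res_add: "res (a + b) = res a + res b" using res by (simp add: residue_map_def)
lemma res_mult: "res (a * b) = res a * res b" using res by (simp add: residue_map_def)
lemma res_one: "res 1 = 1" using res by (simp add: residue_map_def)
lemma res_zero: "res 0 = 0"
proof -
  have "res 0 = res 0 + res 0" using res_add[of 0 0] by simp
  thus ?thesis by (metis add_cancel_right_right)
qed
lemma res_neg: "res (- a) = - res a"
proof -
  have h: "res a + res (-a) = 0" using res_add[of a "-a"] res_zero by simp
  have "res (-a) = (res a + res (-a)) - res a" by simp
  thus ?thesis using h by simp
qed
lemma res_diff: "res (a - b) = res a - res b"
  using res_add[of a "-b"] res_neg[of b] by simp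
lemma res_sum: "res (sum f A) = (\<Sum>x\<in>A. res (f x))"
  by (induction A rule: infinite_finite_induct) (auto simp: res_zero res_add)
lemma res_of_nat: "res (of_nat m) = of_nat m"
  by (induction m) (auto simp: res_zero res_add res_one)
lemma res_J: "res a = 0 \<longleftrightarrow> a \<in> jac_rad"
proof -
  have "{a. res a = 0} = jac_rad" using res by (simp add: residue_map_def)
  thus ?thesis by blast
qed
lemma res_surj: "\<exists>a. res a = c" using res unfolding residue_map_def by (metis surjD)
end

definition rlift :: "('o::comm_ring_1 \<Rightarrow> 'k::field) \<Rightarrow> 'k \<Rightarrow> 'o" where
  "rlift res c = (if c = 0 then 0 else SOME a. res a = c)"

lemma res_rlift: "residue_map res \<Longrightarrow> res (rlift res c) = c"
  unfolding rlift_def using res_zero[of res] res_surj[of res c]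
  by (auto intro: someI_ex)

lemma rlift_0[simp]: "rlift res 0 = 0" by (simp add: rlift_def)

lemma lin_span_0: "(\<lambda>_. 0) \<in> lin_span S"
  unfolding lin_span_def by (rule CollectI, rule exI[of _ "{}"]) auto

lemma lin_span_gen: "s \<in> S \<Longrightarrow> (\<lambda>x. c * s x) \<in> lin_span S"
  unfolding lin_span_def by (rule CollectI, rule exI[of _ "{s}"], rule exI[of _ "\<lambda>_. c"]) auto

lemma lin_span_gen1: "s \<in> S \<Longrightarrow> s \<in> lin_span S"
  using lin_span_gen[of s S 1] by simp

lemma lin_span_scal: "a \<in> lin_span S \<Longrightarrow> (\<lambda>x. c * a x) \<in> lin_span S"
proof -
  assume "a \<in> lin_span S"
  then obtain T r where T: "finite T" "T \<subseteq> S" and a: "a = (\<lambda>x. \<Sum>b\<in>T. r b * b x)"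
    unfolding lin_span_def by blast
  have "(\<lambda>x. c * a x) = (\<lambda>x. \<Sum>b\<in>T. (c * r b) * b x)"
    unfolding a by (simp add: sum_distrib_left mult.assoc)
  thus ?thesis using T unfolding lin_span_def
    by (intro CollectI exI[of _ T] exI[of _ "\<lambda>b. c * r b"]) auto
qed

lemma lin_span_add: "a \<in> lin_span S \<Longrightarrow> b \<in> lin_span S \<Longrightarrow> (\<lambda>x. a x + b x) \<in> lin_span S"
proof -
  assume "a \<in> lin_span S" "b \<in> lin_span S"
  then obtain T r T' r' where T: "finite T" "T \<subseteq> S" and a: "a = (\<lambda>x. \<Sum>b\<in>T. r b * b x)"
    and T': "finite T'" "T' \<subseteq> S" and b: "b = (\<lambda>x. \<Sum>b\<in>T'. r' b * b x)"
    unfolding lin_span_def by blast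
  define r2 where "r2 c = (if c \<in> T then r c else 0) + (if c \<in> T' then r' c else 0)" for c
  have "(\<lambda>x. a x + b x) = (\<lambda>x. \<Sum>c\<in>T \<union> T'. r2 c * c x)"
  proof
    fix x
    have "(\<Sum>c\<in>T \<union> T'. r2 c * c x) = (\<Sum>c\<in>T \<union> T'. (if c \<in> T then r c * c x else 0))
        + (\<Sum>c\<in>T \<union> T'. (if c \<in> T' then r' c * c x else 0))"
    proof -
      have "\<And>c. r2 c * c x = (if c \<in> T then r c * c x else 0) + (if c \<in> T' then r' c * c x else 0)"
        unfolding r2_def by (simp add: distrib_right)
      thus ?thesis by (simp add: sum.distrib)
    qed
    also have "(\<Sum>c\<in>T \<union> T'. (if c \<in> T then r c * c x else 0)) = (\<Sum>c\<in>T. r c * c x)"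
      using T T' by (simp add: sum.If_cases Int_absorb1)
    also have "(\<Sum>c\<in>T \<union> T'. (if c \<in> T' then r' c * c x else 0)) = (\<Sum>c\<in>T'. r' c * c x)"
      using T T' by (simp add: sum.If_cases Int_absorb1)
    finally show "a x + b x = (\<Sum>c\<in>T \<union> T'. r2 c * c x)" using a b by simp
  qed
  thus ?thesis using T T' unfolding lin_span_def
    by (intro CollectI exI[of _ "T \<union> T'"] exI[of _ r2]) auto
qed

lemma lin_span_sum: "finite A \<Longrightarrow> (\<And>i. i \<in> A \<Longrightarrow> f i \<in> lin_span S) \<Longrightarrow>
    (\<lambda>x. \<Sum>i\<in>A. f i x) \<in> lin_span S"
proof (induction A rule: finite_induct)
  case empty then show ?case using lin_span_0 by simp
next
  case (insert i A)
  then show ?case using lin_span_add[of "f i" S "\<lambda>x. \<Sum>i\<in>A. f i x"] by simp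
qed

lemma lin_span_diff: "a \<in> lin_span S \<Longrightarrow> b \<in> lin_span S \<Longrightarrow> (\<lambda>x. a x - b x) \<in> lin_span S"
  using lin_span_add[of a S "\<lambda>x. (-1) * b x"] lin_span_scal[of b S "-1"] by simp




locale pb = group G for G :: "('g,'b) monoid_scheme" (structure) +
  fixes N Q :: "'g set" and p n :: nat
  assumes finG: "finite (carrier G)" and Nn: "N \<lhd> G" and Qs: "subgroup Q G"
    and Qcard: "card Q = p ^ n" and pp: "Factorial_Ring.prime p"
begin

lemma Nsg: "subgroup N G" using normal_imp_subgroup[OF Nn] .
lemma Qc: "u \<in> Q \<Longrightarrow> u \<in> carrier G" by (rule subgroup.mem_carrier[OF Qs])
lemma Nc: "m \<in> N \<Longrightarrow> m \<in> carrier G" by (rule subgroup.mem_carrier[OF Nsg])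
lemma finQ: "finite Q" using finG subgroup.subset[OF Qs] by (rule finite_subset[rotated])
lemma Q_m: "u \<in> Q \<Longrightarrow> v \<in> Q \<Longrightarrow> u \<otimes> v \<in> Q" by (rule subgroup.m_closed[OF Qs])
lemma Q_inv: "u \<in> Q \<Longrightarrow> inv u \<in> Q" by (rule subgroup.m_inv_closed[OF Qs])
lemma Q_one: "\<one> \<in> Q" by (rule subgroup.one_closed[OF Qs])
lemma N_m: "u \<in> N \<Longrightarrow> v \<in> N \<Longrightarrow> u \<otimes> v \<in> N" by (rule subgroup.m_closed[OF Nsg])
lemma N_inv: "u \<in> N \<Longrightarrow> inv u \<in> N" by (rule subgroup.m_inv_closed[OF Nsg])
lemma N_conj: "u \<in> N \<Longrightarrow> y \<in> carrier G \<Longrightarrow> y \<otimes> u \<otimes> inv y \<in> N"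
  by (rule normal.inv_op_closed2[OF Nn])

lemma can1[simp]: "x \<in> carrier G \<Longrightarrow> w \<in> carrier G \<Longrightarrow> inv x \<otimes> (x \<otimes> w) = w"
  by (simp add: m_assoc[symmetric])
lemma can2[simp]: "x \<in> carrier G \<Longrightarrow> w \<in> carrier G \<Longrightarrow> x \<otimes> (inv x \<otimes> w) = w"
  by (simp add: m_assoc[symmetric])

lemma normalizer_iff0: "y \<in> normalizer G Q \<longleftrightarrow> y \<in> carrier G \<and> y <# Q #> inv y = Q"
proof -
  have Qsub: "Q \<subseteq> carrier G" using Qc by blast
  show ?thesis unfolding normalizer_def stabilizer_def using Qsub by simp
qed

lemma conj_set_eq: "y \<in> carrier G \<Longrightarrow> y <# Q #> inv y = (\<lambda>u. y \<otimes> u \<otimes> inv y) ` Q"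
  unfolding l_coset_def r_coset_def by auto

lemma normalizer_iff: "y \<in> normalizer G Q \<longleftrightarrow> y \<in> carrier G \<and> (\<forall>u\<in>Q. y \<otimes> u \<otimes> inv y \<in> Q)
   \<and> (\<forall>u\<in>Q. inv y \<otimes> u \<otimes> y \<in> Q)"
proof
  assume y: "y \<in> normalizer G Q"
  hence yc: "y \<in> carrier G" and eq: "(\<lambda>u. y \<otimes> u \<otimes> inv y) ` Q = Q"
    using normalizer_iff0 conj_set_eq by auto
  have A: "\<forall>u\<in>Q. y \<otimes> u \<otimes> inv y \<in> Q" using eq by blast
  have "\<forall>u\<in>Q. inv y \<otimes> u \<otimes> y \<in> Q"
  proof
    fix u assume "u \<in> Q"
    then obtain w where w: "w \<in> Q" "u = y \<otimes> w \<otimes> inv y" using eq by blast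
    have "inv y \<otimes> u \<otimes> y = w" using w yc Qc[OF w(1)] by (simp add: m_assoc)
    thus "inv y \<otimes> u \<otimes> y \<in> Q" using w by simp
  qed
  thus "y \<in> carrier G \<and> (\<forall>u\<in>Q. y \<otimes> u \<otimes> inv y \<in> Q) \<and> (\<forall>u\<in>Q. inv y \<otimes> u \<otimes> y \<in> Q)"
    using A yc by blast
next
  assume H: "y \<in> carrier G \<and> (\<forall>u\<in>Q. y \<otimes> u \<otimes> inv y \<in> Q) \<and> (\<forall>u\<in>Q. inv y \<otimes> u \<otimes> y \<in> Q)"
  have "(\<lambda>u. y \<otimes> u \<otimes> inv y) ` Q = Q"
  proof
    show "(\<lambda>u. y \<otimes> u \<otimes> inv y) ` Q \<subseteq> Q" using H by blast
    show "Q \<subseteq> (\<lambda>u. y \<otimes> u \<otimes> inv y) ` Q"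
    proof
      fix u assume u: "u \<in> Q"
      have "u = y \<otimes> (inv y \<otimes> u \<otimes> y) \<otimes> inv y" using H Qc[OF u] by (simp add: m_assoc)
      moreover have "inv y \<otimes> u \<otimes> y \<in> Q" using H u by blast
      ultimately show "u \<in> (\<lambda>u. y \<otimes> u \<otimes> inv y) ` Q" by (rule image_eqI)
    qed
  qed
  thus "y \<in> normalizer G Q" using H normalizer_iff0 conj_set_eq by auto
qed

lemma conj_aut_apply: "u \<in> Q \<Longrightarrow> conj_aut G x Q u = x \<otimes> u \<otimes> inv x"
  by (simp add: conj_aut_def)
lemma conj_aut_ext: "conj_aut G x Q \<in> extensional Q"
  by (simp add: conj_aut_def)

abbreviation "K \<equiv> Kgrp G N Q"

lemma K_iff: "\<phi> \<in> K \<longleftrightarrow> \<phi> \<in> extensional Q \<and> (\<forall>u\<in>Q. \<phi> u \<in> Q) \<and> inj_on \<phi> Q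
   \<and> (\<forall>u\<in>Q. \<forall>v\<in>Q. \<phi> (u \<otimes> v) = \<phi> u \<otimes> \<phi> v) \<and> (\<forall>u\<in>Q. \<exists>m\<in>N. \<phi> u = u \<otimes> m)"
proof -
  have lc: "x \<in> u <# N \<longleftrightarrow> (\<exists>m\<in>N. x = u \<otimes> m)" for x u
    unfolding l_coset_def by auto
  have "bij_betw \<phi> Q Q \<longleftrightarrow> (\<forall>u\<in>Q. \<phi> u \<in> Q) \<and> inj_on \<phi> Q"
    using endo_inj_surj[OF finQ, of \<phi>] unfolding bij_betw_def by blast
  moreover have "\<phi> \<in> K \<longleftrightarrow> (\<phi> \<in> Q \<rightarrow> Q \<and> (\<forall>u\<in>Q. \<forall>v\<in>Q. \<phi> (u \<otimes> v) = \<phi> u \<otimes> \<phi> v))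
     \<and> (\<phi> \<in> extensional Q \<and> bij_betw \<phi> Q Q) \<and> (\<forall>u\<in>Q. \<phi> u \<in> u <# N)"
    unfolding Kgrp_def auto_def hom_def Bij_def by simp
  ultimately show ?thesis using lc unfolding Pi_def by blast
qed

lemma K_ext: "\<phi> \<in> K \<Longrightarrow> \<phi> \<in> extensional Q" using K_iff by blast
lemma K_Q: "\<phi> \<in> K \<Longrightarrow> u \<in> Q \<Longrightarrow> \<phi> u \<in> Q" using K_iff by blast
lemma K_c: "\<phi> \<in> K \<Longrightarrow> u \<in> Q \<Longrightarrow> \<phi> u \<in> carrier G" using K_Q Qc by blast
lemma K_inj: "\<phi> \<in> K \<Longrightarrow> inj_on \<phi> Q" using K_iff by blast
lemma K_hom: "\<phi> \<in> K \<Longrightarrow> u \<in> Q \<Longrightarrow> v \<in> Q \<Longrightarrow> \<phi> (u \<otimes> v) = \<phi> u \<otimes> \<phi> v" using K_iff by blast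
lemma K_N: "\<phi> \<in> K \<Longrightarrow> u \<in> Q \<Longrightarrow> \<exists>m\<in>N. \<phi> u = u \<otimes> m" using K_iff by blast
lemma K_surj: "\<phi> \<in> K \<Longrightarrow> \<phi> ` Q = Q"
  using endo_inj_surj[OF finQ] K_Q K_inj by blast
lemma K_one: "\<phi> \<in> K \<Longrightarrow> \<phi> \<one> = \<one>"
proof -
  assume k: "\<phi> \<in> K"
  have "\<phi> \<one> = \<phi> \<one> \<otimes> \<phi> \<one>" using K_hom[OF k Q_one Q_one] by simp
  hence "inv (\<phi> \<one>) \<otimes> \<phi> \<one> = inv (\<phi> \<one>) \<otimes> (\<phi> \<one> \<otimes> \<phi> \<one>)" by simp
  thus ?thesis using K_c[OF k Q_one] by simp
qed
lemma K_inv: "\<phi> \<in> K \<Longrightarrow> u \<in> Q \<Longrightarrow> \<phi> (inv u) = inv (\<phi> u)"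
proof -
  assume k: "\<phi> \<in> K" and u: "u \<in> Q"
  have "\<phi> u \<otimes> \<phi> (inv u) = \<one>" using K_hom[OF k u Q_inv[OF u]] K_one[OF k] Qc[OF u] by simp
  hence "\<phi> (inv u) \<otimes> \<phi> u = \<one>" using inv_comm K_c[OF k u] K_c[OF k Q_inv[OF u]] by blast
  hence "inv (\<phi> u) = \<phi> (inv u)" using inv_equality K_c[OF k u] K_c[OF k Q_inv[OF u]] by blast
  thus ?thesis by simp
qed
lemma finK: "finite K"
proof -
  have "K \<subseteq> Q \<rightarrow>\<^sub>E Q" unfolding PiE_iff subset_iff using K_iff by blast
  moreover have "finite (Q \<rightarrow>\<^sub>E Q)" using finite_PiE[OF finQ finQ] .
  ultimately show ?thesis by (rule finite_subset)
qed

lemma conj_in_K_normalizer: "x \<in> carrier G \<Longrightarrow> conj_aut G x Q \<in> K \<Longrightarrow> x \<in> normalizer G Q"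
proof -
  assume x: "x \<in> carrier G" and k: "conj_aut G x Q \<in> K"
  have A: "\<forall>u\<in>Q. x \<otimes> u \<otimes> inv x \<in> Q" using K_Q[OF k] conj_aut_apply by metis
  have "\<forall>u\<in>Q. inv x \<otimes> u \<otimes> x \<in> Q"
  proof
    fix u assume u: "u \<in> Q"
    then obtain w where w: "w \<in> Q" "u = conj_aut G x Q w" using K_surj[OF k] by blast
    hence "u = x \<otimes> w \<otimes> inv x" using conj_aut_apply by simp
    hence "inv x \<otimes> u \<otimes> x = w" using x Qc[OF w(1)] by (simp add: m_assoc)
    thus "inv x \<otimes> u \<otimes> x \<in> Q" using w by simp
  qed
  thus ?thesis using A x normalizer_iff by blast
qed

lemma NK_iff: "x \<in> NK G N Q \<longleftrightarrow> x \<in> carrier G \<and> conj_aut G x Q \<in> K"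
  unfolding NK_def using conj_in_K_normalizer normalizer_iff by blast

lemma NK_c: "x \<in> NK G N Q \<Longrightarrow> x \<in> carrier G" using NK_iff by blast

lemma finNK: "finite (NK G N Q)"
proof -
  have "NK G N Q \<subseteq> carrier G" using NK_c by blast
  thus ?thesis using finG by (rule finite_subset)
qed

end



lemma mk_group_action:
  assumes H: "group H"
    and cl: "\<And>h s. h \<in> carrier H \<Longrightarrow> s \<in> S \<Longrightarrow> a h s \<in> S"
    and one: "\<And>s. s \<in> S \<Longrightarrow> a \<one>\<^bsub>H\<^esub> s = s"
    and mul: "\<And>h1 h2 s. h1 \<in> carrier H \<Longrightarrow> h2 \<in> carrier H \<Longrightarrow> s \<in> S \<Longrightarrow>
              a (h1 \<otimes>\<^bsub>H\<^esub> h2) s = a h1 (a h2 s)"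
  shows "group_action H S (\<lambda>h. \<lambda>s\<in>S. a h s)"
proof -
  have B: "(\<lambda>s\<in>S. a h s) \<in> Bij S" if h: "h \<in> carrier H" for h
  proof -
    have ih: "inv\<^bsub>H\<^esub> h \<in> carrier H" using H h by (simp add: group.inv_closed)
    have "bij_betw (\<lambda>s\<in>S. a h s) S S"
    proof (rule bij_betw_byWitness[where f'="\<lambda>s. a (inv\<^bsub>H\<^esub> h) s"])
      show "\<forall>s\<in>S. a (inv\<^bsub>H\<^esub> h) ((\<lambda>s\<in>S. a h s) s) = s"
        using mul[OF ih h] one H h by (simp add: group.l_inv)
      show "\<forall>s\<in>S. (\<lambda>s\<in>S. a h s) (a (inv\<^bsub>H\<^esub> h) s) = s"
        using mul[OF h ih] one H h cl[OF ih] by (simp add: group.r_inv)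
      show "(\<lambda>s\<in>S. a h s) ` S \<subseteq> S" using cl[OF h] by auto
      show "(\<lambda>s. a (inv\<^bsub>H\<^esub> h) s) ` S \<subseteq> S" using cl[OF ih] by auto
    qed
    thus ?thesis unfolding Bij_def by simp
  qed
  have hom: "(\<lambda>h. \<lambda>s\<in>S. a h s) \<in> hom H (BijGroup S)"
  proof (rule homI)
    show "(\<lambda>s\<in>S. a h s) \<in> carrier (BijGroup S)" if "h \<in> carrier H" for h
      using B[OF that] by (simp add: BijGroup_def)
    show "(\<lambda>s\<in>S. a (x \<otimes>\<^bsub>H\<^esub> y) s) = (\<lambda>s\<in>S. a x s) \<otimes>\<^bsub>BijGroup S\<^esub> (\<lambda>s\<in>S. a y s)"
      if "x \<in> carrier H" "y \<in> carrier H" for x y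
      using B[OF that(1)] B[OF that(2)] mul[OF that] cl[OF that(2)]
      by (auto simp: BijGroup_def compose_def)
  qed
  show ?thesis unfolding group_action_def group_hom_def group_hom_axioms_def
    using H group_BijGroup hom by blast
qed

lemma (in group_action) pgroup_fixsum:
  fixes f :: "_ \<Rightarrow> 'k::field"
  assumes fin: "finite (carrier G)" and ord: "card (carrier G) = p ^ m" and pr: "Factorial_Ring.prime p"
    and ch: "CHAR('k) = p" and finE: "finite E"
    and inv: "\<And>g x. g \<in> carrier G \<Longrightarrow> x \<in> E \<Longrightarrow> f (\<phi> g x) = f x"
  shows "sum f E = sum f {x\<in>E. \<forall>g\<in>carrier G. \<phi> g x = x}"
proof -
  interpret grp: group G using group_hom group_hom.axioms(1) by auto
  define Fx where "Fx = {x\<in>E. \<forall>g\<in>carrier G. \<phi> g x = x}"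
  define f' where "f' x = (if x \<in> Fx then f x else 0)" for x
  have orb_eq: "sum f orb = sum f' orb" if orb: "orb \<in> orbits G E \<phi>" for orb
  proof -
    obtain x0 where x0: "x0 \<in> E" "orb = orbit G \<phi> x0"
      using orb unfolding orbits_def by blast
    have "orb \<subseteq> \<Union>(orbits G E \<phi>)" using orb by (rule Union_upper)
    hence "orb \<subseteq> E" by (simp add: orbits_coverture)
    hence fin_orb: "finite orb" using finE by (rule finite_subset)
    have const: "f y = f x0" if "y \<in> orb" for y
      using that x0 inv unfolding orbit_def by auto
    have cs: "card orb * card (stabilizer G \<phi> x0) = p ^ m"
      using orbit_stabilizer_theorem[OF x0(1)] x0(2) ord by (simp add: order_def)
    hence "card orb dvd p ^ m" by (intro dvdI[where k="card (stabilizer G \<phi> x0)"]) simp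
    then obtain i where i: "i \<le> m" "card orb = p ^ i"
      using divides_primepow_nat[OF pr] by blast
    show ?thesis
    proof (cases "i = 0")
      case True
      hence c1: "card orb = 1" using i by simp
      have "x0 \<in> orb" using x0 orbit_refl by blast
      from c1 obtain z where "orb = {z}" by (rule card_1_singletonE)
      hence ob: "orb = {x0}" using \<open>x0 \<in> orb\<close> by simp
      have "x0 \<in> Fx"
      proof -
        have "\<forall>g\<in>carrier G. \<phi> g x0 = x0"
        proof
          fix g assume "g \<in> carrier G"
          hence "\<phi> g x0 \<in> orb" using x0 unfolding orbit_def by blast
          thus "\<phi> g x0 = x0" using ob by blast
        qed
        thus ?thesis using x0 unfolding Fx_def by blast
      qed
      thus ?thesis using ob unfolding f'_def by simp
    next
      case False
      have pd: "p dvd card orb" using i False by simp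
      have "sum f orb = of_nat (card orb) * f x0" using const by simp
      also have "of_nat (card orb) = (0::'k)" using pd ch by (simp add: of_nat_eq_0_iff_char_dvd)
      finally have s1: "sum f orb = 0" by simp
      have nofix: "y \<notin> Fx" if y: "y \<in> orb" for y
      proof
        assume yF: "y \<in> Fx"
        obtain g where g: "g \<in> carrier G" "y = \<phi> g x0" using y x0 unfolding orbit_def by blast
        have "\<phi> (inv g) y = x0" using orbit_sym_aux[OF g(1) x0(1) g(2)[symmetric]] .
        moreover have "inv g \<in> carrier G"
          using g(1) by simp
        ultimately have "y = x0" using yF unfolding Fx_def by auto
        have "orb \<subseteq> {x0}"
        proof
          fix z assume "z \<in> orb"
          then obtain h where "h \<in> carrier G" "z = \<phi> h x0" using x0 unfolding orbit_def by blast
          thus "z \<in> {x0}" using yF \<open>y = x0\<close> unfolding Fx_def by auto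
        qed
        hence "card orb \<le> card {x0}" by (intro card_mono) auto
        hence "card orb \<le> 1" by simp
        moreover have "p ^ i \<ge> p" using False prime_gt_0_nat[OF pr] by (simp add: self_le_power)
        moreover have "p \<ge> 2" using prime_ge_2_nat[OF pr] .
        ultimately show False using \<open>card orb = p ^ i\<close> by linarith
      qed
      have "sum f' orb = 0" unfolding f'_def using nofix by simp
      thus ?thesis using s1 by simp
    qed
  qed
  have "sum f E = (\<Sum>orb\<in>orbits G E \<phi>. sum f orb)" using disjoint_sum[OF finE, of f] by simp
  also have "\<dots> = (\<Sum>orb\<in>orbits G E \<phi>. sum f' orb)" using orb_eq by simp
  also have "\<dots> = sum f' E" using disjoint_sum[OF finE, of f'] by simp
  also have "\<dots> = sum f Fx" unfolding f'_def using finE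
    by (simp add: sum.If_cases Fx_def Int_def)
  finally show ?thesis unfolding Fx_def .
qed




context pb begin

lemma inv_conj: "x \<in> carrier G \<Longrightarrow> u \<in> carrier G \<Longrightarrow> inv (x \<otimes> u \<otimes> inv x) = x \<otimes> inv u \<otimes> inv x"
  by (simp add: inv_mult_group m_assoc)

lemma conj_mult: "y \<in> carrier G \<Longrightarrow> a \<in> carrier G \<Longrightarrow> b \<in> carrier G \<Longrightarrow>
   y \<otimes> (a \<otimes> b) \<otimes> inv y = (y \<otimes> a \<otimes> inv y) \<otimes> (y \<otimes> b \<otimes> inv y)"
  by (simp add: m_assoc)

lemma conj_inj: "y \<in> carrier G \<Longrightarrow> a \<in> carrier G \<Longrightarrow> b \<in> carrier G \<Longrightarrow>
   y \<otimes> a \<otimes> inv y = y \<otimes> b \<otimes> inv y \<Longrightarrow> a = b"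
  by (simp add: m_assoc)

lemma conj_back: "y \<in> carrier G \<Longrightarrow> u \<in> carrier G \<Longrightarrow> y \<otimes> (inv y \<otimes> u \<otimes> y) \<otimes> inv y = u"
  by (simp add: m_assoc)

definition cj :: "'g \<Rightarrow> ('g \<Rightarrow> 'g) \<Rightarrow> ('g \<Rightarrow> 'g)" where
  "cj y \<chi> = (\<lambda>u\<in>Q. y \<otimes> \<chi> (inv y \<otimes> u \<otimes> y) \<otimes> inv y)"

lemma phi_conj_cj: "y \<in> carrier G \<Longrightarrow> phi_conj G Q (inv y) \<chi> = cj y \<chi>"
  unfolding phi_conj_def cj_def by simp

lemma cj_K: assumes y: "y \<in> normalizer G Q" and k: "\<chi> \<in> K" shows "cj y \<chi> \<in> K"
proof -
  have yc: "y \<in> carrier G" and y1: "\<And>u. u \<in> Q \<Longrightarrow> y \<otimes> u \<otimes> inv y \<in> Q"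
    and y2: "\<And>u. u \<in> Q \<Longrightarrow> inv y \<otimes> u \<otimes> y \<in> Q" using y normalizer_iff by auto
  have ap: "cj y \<chi> u = y \<otimes> \<chi> (inv y \<otimes> u \<otimes> y) \<otimes> inv y" if "u \<in> Q" for u
    using that unfolding cj_def by simp
  have ext: "cj y \<chi> \<in> extensional Q" unfolding cj_def by simp
  have inQ: "\<forall>u\<in>Q. cj y \<chi> u \<in> Q" using ap y1 y2 K_Q[OF k] by simp
  have inj: "inj_on (cj y \<chi>) Q"
  proof (rule inj_onI)
    fix a b assume a: "a \<in> Q" and b: "b \<in> Q" and e: "cj y \<chi> a = cj y \<chi> b"
    hence "\<chi> (inv y \<otimes> a \<otimes> y) = \<chi> (inv y \<otimes> b \<otimes> y)"
      using ap conj_inj[OF yc] K_c[OF k] y2 by simp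
    hence "inv y \<otimes> a \<otimes> y = inv y \<otimes> b \<otimes> y" using K_inj[OF k] y2 a b by (simp add: inj_on_eq_iff)
    hence "y \<otimes> (inv y \<otimes> a \<otimes> y) \<otimes> inv y = y \<otimes> (inv y \<otimes> b \<otimes> y) \<otimes> inv y" by simp
    thus "a = b" using conj_back yc Qc a b by simp
  qed
  have hom: "\<forall>u\<in>Q. \<forall>v\<in>Q. cj y \<chi> (u \<otimes> v) = cj y \<chi> u \<otimes> cj y \<chi> v"
  proof (intro ballI)
    fix u v assume u: "u \<in> Q" and v: "v \<in> Q"
    have "inv y \<otimes> (u \<otimes> v) \<otimes> y = (inv y \<otimes> u \<otimes> y) \<otimes> (inv y \<otimes> v \<otimes> y)"
      using conj_mult[of "inv y" u v] yc Qc u v by simp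
    hence "\<chi> (inv y \<otimes> (u \<otimes> v) \<otimes> y) = \<chi> (inv y \<otimes> u \<otimes> y) \<otimes> \<chi> (inv y \<otimes> v \<otimes> y)"
      using K_hom[OF k] y2 u v by simp
    thus "cj y \<chi> (u \<otimes> v) = cj y \<chi> u \<otimes> cj y \<chi> v"
      using ap u v Q_m conj_mult yc K_c[OF k] y2 by simp
  qed
  have NN: "\<forall>u\<in>Q. \<exists>m\<in>N. cj y \<chi> u = u \<otimes> m"
  proof
    fix u assume u: "u \<in> Q"
    obtain m where m: "m \<in> N" "\<chi> (inv y \<otimes> u \<otimes> y) = (inv y \<otimes> u \<otimes> y) \<otimes> m"
      using K_N[OF k y2[OF u]] by blast
    have "cj y \<chi> u = y \<otimes> ((inv y \<otimes> u \<otimes> y) \<otimes> m) \<otimes> inv y" using ap u m by simp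
    also have "\<dots> = u \<otimes> (y \<otimes> m \<otimes> inv y)"
      using yc Qc[OF u] Nc[OF m(1)] by (simp add: m_assoc)
    finally show "\<exists>m\<in>N. cj y \<chi> u = u \<otimes> m" using N_conj[OF m(1) yc] by blast
  qed
  show ?thesis using K_iff ext inQ inj hom NN by blast
qed

lemma cj_conj: assumes y: "y \<in> normalizer G Q" and x: "x \<in> carrier G"
  shows "cj y (conj_aut G x Q) = conj_aut G (y \<otimes> x \<otimes> inv y) Q"
proof (rule extensionalityI[where A=Q])
  show "cj y (conj_aut G x Q) \<in> extensional Q" unfolding cj_def by simp
  show "conj_aut G (y \<otimes> x \<otimes> inv y) Q \<in> extensional Q" by (rule conj_aut_ext)
  fix u assume u: "u \<in> Q"
  have yc: "y \<in> carrier G" and y2: "inv y \<otimes> u \<otimes> y \<in> Q" using y u normalizer_iff by auto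
  show "cj y (conj_aut G x Q) u = conj_aut G (y \<otimes> x \<otimes> inv y) Q u"
    unfolding cj_def using u y2 yc x Qc[OF u] by (simp add: conj_aut_apply inv_mult_group m_assoc)
qed

lemma NK_conj: assumes y: "y \<in> normalizer G Q" and x: "x \<in> NK G N Q"
  shows "y \<otimes> x \<otimes> inv y \<in> NK G N Q"
proof -
  have yc: "y \<in> carrier G" using y normalizer_iff by auto
  have xc: "x \<in> carrier G" and k: "conj_aut G x Q \<in> K" using x NK_iff by auto
  have "conj_aut G (y \<otimes> x \<otimes> inv y) Q \<in> K" using cj_K[OF y k] cj_conj[OF y xc] by simp
  thus ?thesis using NK_iff yc xc by simp
qed

lemma compose_apply: "u \<in> Q \<Longrightarrow> compose Q \<chi> \<omega> u = \<chi> (\<omega> u)" by (simp add: compose_def)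

lemma conj_quot: assumes x: "x \<in> carrier G" and y: "y \<in> carrier G"
  and cy: "conj_aut G y Q = \<chi>" and cx: "conj_aut G x Q = compose Q \<chi> \<omega>" and w: "\<omega> \<in> K"
  shows "conj_aut G (inv y \<otimes> x) Q = \<omega>"
proof (rule extensionalityI[where A=Q])
  show "conj_aut G (inv y \<otimes> x) Q \<in> extensional Q" by (rule conj_aut_ext)
  show "\<omega> \<in> extensional Q" by (rule K_ext[OF w])
  fix u assume u: "u \<in> Q"
  have wu: "\<omega> u \<in> Q" using K_Q[OF w u] .
  have e1: "x \<otimes> u \<otimes> inv x = \<chi> (\<omega> u)"
    using cx u conj_aut_apply[OF u, of x] compose_apply[OF u] by metis
  have e2: "\<chi> (\<omega> u) = y \<otimes> \<omega> u \<otimes> inv y" using cy conj_aut_apply[OF wu, of y] by simp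
  have "conj_aut G (inv y \<otimes> x) Q u = inv y \<otimes> (x \<otimes> u \<otimes> inv x) \<otimes> y"
    using u x y Qc[OF u] by (simp add: conj_aut_apply inv_mult_group m_assoc)
  also have "\<dots> = \<omega> u" using e1 e2 y Qc[OF wu] by (simp add: m_assoc)
  finally show "conj_aut G (inv y \<otimes> x) Q u = \<omega> u" .
qed

lemma fix_pt1: assumes x: "x \<in> carrier G" and u: "u \<in> Q"
  shows "inv (conj_aut G x Q u) \<otimes> x \<otimes> u = x"
proof -
  have "inv (conj_aut G x Q u) = x \<otimes> inv u \<otimes> inv x"
    using conj_aut_apply[OF u] inv_conj[OF x Qc[OF u]] by simp
  thus ?thesis using x Qc[OF u] by (simp add: m_assoc)
qed

lemma fix_pt2: assumes x: "x \<in> carrier G" and u: "u \<in> Q"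
  shows "conj_aut G x Q u \<otimes> x \<otimes> inv u = x"
  using x u Qc[OF u] by (simp add: conj_aut_apply m_assoc)

lemma fix_pt_conv: assumes x: "x \<in> carrier G" and e: "\<phi> \<in> extensional Q"
  and c: "\<And>u. u \<in> Q \<Longrightarrow> \<phi> u \<in> carrier G"
  and h: "\<And>u. u \<in> Q \<Longrightarrow> \<phi> u \<otimes> x \<otimes> inv u = x"
  shows "conj_aut G x Q = \<phi>"
proof (rule extensionalityI[where A=Q])
  show "conj_aut G x Q \<in> extensional Q" by (rule conj_aut_ext)
  show "\<phi> \<in> extensional Q" by (rule e)
  fix u assume u: "u \<in> Q"
  have "\<phi> u \<otimes> x \<otimes> inv u \<otimes> u \<otimes> inv x = x \<otimes> u \<otimes> inv x" using h[OF u] by simp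
  hence "\<phi> u = x \<otimes> u \<otimes> inv x" using x c[OF u] Qc[OF u] by (simp add: m_assoc)
  thus "conj_aut G x Q u = \<phi> u" using conj_aut_apply[OF u] by simp
qed

lemma CN_coset: assumes z: "z \<in> NK G N Q" and x: "x \<in> carrier G"
  shows "x \<in> CN G N Q #> z \<longleftrightarrow> x \<in> N #> z \<and> conj_aut G x Q = conj_aut G z Q"
proof -
  have zc: "z \<in> carrier G" using z NK_iff by auto
  have zn: "z \<in> normalizer G Q" using z NK_iff conj_in_K_normalizer by auto
  have z1: "\<And>u. u \<in> Q \<Longrightarrow> z \<otimes> u \<otimes> inv z \<in> Q" and z2: "\<And>u. u \<in> Q \<Longrightarrow> inv z \<otimes> u \<otimes> z \<in> Q"
    using zn normalizer_iff by auto
  show ?thesis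
  proof
    assume "x \<in> CN G N Q #> z"
    then obtain c where c: "c \<in> N" "\<forall>u\<in>Q. c \<otimes> u = u \<otimes> c" "x = c \<otimes> z"
      unfolding r_coset_def CN_def by auto
    have cc: "c \<in> carrier G" using Nc[OF c(1)] .
    have "x \<in> N #> z" using c unfolding r_coset_def by auto
    moreover have "conj_aut G x Q = conj_aut G z Q"
    proof (rule extensionalityI[where A=Q])
      fix u assume u: "u \<in> Q"
      have w: "z \<otimes> u \<otimes> inv z \<in> Q" using z1[OF u] .
      have "c \<otimes> (z \<otimes> u \<otimes> inv z) = (z \<otimes> u \<otimes> inv z) \<otimes> c" using c(2) w by blast
      hence "c \<otimes> (z \<otimes> u \<otimes> inv z) \<otimes> inv c = z \<otimes> u \<otimes> inv z"
        using cc zc Qc[OF u] by (simp add: m_assoc)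
      thus "conj_aut G x Q u = conj_aut G z Q u"
        using u c(3) cc zc Qc[OF u] by (simp add: conj_aut_apply inv_mult_group m_assoc)
    qed (simp_all add: conj_aut_ext)
    ultimately show "x \<in> N #> z \<and> conj_aut G x Q = conj_aut G z Q" by blast
  next
    assume H: "x \<in> N #> z \<and> conj_aut G x Q = conj_aut G z Q"
    then obtain m where m: "m \<in> N" "x = m \<otimes> z" unfolding r_coset_def by auto
    have mc: "m \<in> carrier G" using Nc[OF m(1)] .
    have "\<forall>u\<in>Q. m \<otimes> u = u \<otimes> m"
    proof
      fix u assume u: "u \<in> Q"
      define w where "w = inv z \<otimes> u \<otimes> z"
      have w: "w \<in> Q" using z2[OF u] w_def by simp
      have "x \<otimes> w \<otimes> inv x = z \<otimes> w \<otimes> inv z"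
        using H conj_aut_apply[OF w, of x] conj_aut_apply[OF w, of z] by simp
      also have "\<dots> = u" unfolding w_def using zc Qc[OF u] by (simp add: m_assoc)
      finally have "m \<otimes> z \<otimes> w \<otimes> inv (m \<otimes> z) = u" using m by simp
      hence "m \<otimes> u \<otimes> inv m = u" unfolding w_def using mc zc Qc[OF u]
        by (simp add: inv_mult_group m_assoc)
      hence "m \<otimes> u \<otimes> inv m \<otimes> m = u \<otimes> m" by simp
      thus "m \<otimes> u = u \<otimes> m" using mc Qc[OF u] by (simp add: m_assoc)
    qed
    hence "m \<in> CN G N Q" using m unfolding CN_def by simp
    thus "x \<in> CN G N Q #> z" using m unfolding r_coset_def by auto
  qed
qed

end



context pb begin

lemma Delta_img: "Delta \<phi> Q = (\<lambda>u. (\<phi> u, u)) ` Q" unfolding Delta_def by auto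

lemma card_Delta: "card (Delta \<phi> Q) = card Q"
proof -
  have "inj_on (\<lambda>u. (\<phi> u, u)) Q" by (rule inj_onI) simp
  thus ?thesis unfolding Delta_img by (rule card_image)
qed

lemma fin_Delta: "finite (Delta \<phi> Q)" unfolding Delta_img using finQ by simp

lemma GG: "group (G \<times>\<times> G)" by (rule DirProd_group[OF is_group is_group])

lemma Delta_sub: assumes k: "\<phi> \<in> K" shows "subgroup (Delta \<phi> Q) (G \<times>\<times> G)"
proof (rule group.subgroupI[OF GG])
  show "Delta \<phi> Q \<subseteq> carrier (G \<times>\<times> G)" unfolding Delta_def using K_c[OF k] Qc by auto
  show "Delta \<phi> Q \<noteq> {}" unfolding Delta_def using Q_one by auto
  fix a assume "a \<in> Delta \<phi> Q"
  then obtain u where u: "u \<in> Q" "a = (\<phi> u, u)" unfolding Delta_def by auto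
  have "inv\<^bsub>G \<times>\<times> G\<^esub> a = (inv (\<phi> u), inv u)" using u K_c[OF k u(1)] Qc[OF u(1)]
    by (simp add: inv_DirProd[OF is_group is_group])
  also have "\<dots> = (\<phi> (inv u), inv u)" using K_inv[OF k u(1)] by simp
  finally show "inv\<^bsub>G \<times>\<times> G\<^esub> a \<in> Delta \<phi> Q" unfolding Delta_def using Q_inv[OF u(1)] by auto
next
  fix a b assume "a \<in> Delta \<phi> Q" "b \<in> Delta \<phi> Q"
  then obtain u v where u: "u \<in> Q" "a = (\<phi> u, u)" and v: "v \<in> Q" "b = (\<phi> v, v)"
    unfolding Delta_def by auto
  have "a \<otimes>\<^bsub>G \<times>\<times> G\<^esub> b = (\<phi> (u \<otimes> v), u \<otimes> v)" using u v K_hom[OF k u(1) v(1)] by simp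
  thus "a \<otimes>\<^bsub>G \<times>\<times> G\<^esub> b \<in> Delta \<phi> Q" unfolding Delta_def using Q_m[OF u(1) v(1)] by auto
qed

lemma biact_apply: "g \<in> carrier G \<Longrightarrow> biact G (v, u) a g = a (inv v \<otimes> g \<otimes> u)"
  by (simp add: biact_def)
lemma biact_out: "g \<notin> carrier G \<Longrightarrow> biact G t a g = 0"
  by (simp add: biact_def)

lemma OG_out: "a \<in> OG G \<Longrightarrow> g \<notin> carrier G \<Longrightarrow> a g = 0" unfolding OG_def by blast

lemma fixpts_Delta_iff: "a \<in> fixpts G (Delta \<phi> Q) \<longleftrightarrow>
    a \<in> OG G \<and> (\<forall>u\<in>Q. \<forall>g\<in>carrier G. a (inv (\<phi> u) \<otimes> g \<otimes> u) = a g)"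
proof
  assume a: "a \<in> fixpts G (Delta \<phi> Q)"
  hence O: "a \<in> OG G" unfolding fixpts_def by blast
  have "a (inv (\<phi> u) \<otimes> g \<otimes> u) = a g" if "u \<in> Q" "g \<in> carrier G" for u g
  proof -
    have "(\<phi> u, u) \<in> Delta \<phi> Q" using that unfolding Delta_def by auto
    hence "biact G (\<phi> u, u) a = a" using a unfolding fixpts_def by blast
    hence e1: "biact G (\<phi> u, u) a g = a g" by simp
    have e2: "biact G (\<phi> u, u) a g = a (inv (\<phi> u) \<otimes> g \<otimes> u)" by (rule biact_apply[OF that(2)])
    show ?thesis using e1 e2 by simp
  qed
  thus "a \<in> OG G \<and> (\<forall>u\<in>Q. \<forall>g\<in>carrier G. a (inv (\<phi> u) \<otimes> g \<otimes> u) = a g)" using O by blast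
next
  assume H: "a \<in> OG G \<and> (\<forall>u\<in>Q. \<forall>g\<in>carrier G. a (inv (\<phi> u) \<otimes> g \<otimes> u) = a g)"
  have "biact G r a = a" if rD: "r \<in> Delta \<phi> Q" for r
  proof
    fix g
    obtain u where u: "u \<in> Q" "r = (\<phi> u, u)" using rD unfolding Delta_def by auto
    show "biact G r a g = a g"
    proof (cases "g \<in> carrier G")
      case True thus ?thesis using H u biact_apply[OF True, of "\<phi> u" u a] by simp
    next
      case False thus ?thesis using H biact_out OG_out by metis
    qed
  qed
  thus "a \<in> fixpts G (Delta \<phi> Q)" using H unfolding fixpts_def by blast
qed

lemma fix_inv2: assumes a: "a \<in> fixpts G (Delta \<phi> Q)" and k: "\<phi> \<in> K" and u: "u \<in> Q"
  and g: "g \<in> carrier G" shows "a (\<phi> u \<otimes> g \<otimes> inv u) = a g"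
proof -
  have "a (inv (\<phi> (inv u)) \<otimes> g \<otimes> inv u) = a g"
    using a Q_inv[OF u] g unfolding fixpts_Delta_iff by blast
  thus ?thesis using K_inv[OF k u] K_c[OF k u] by simp
qed

lemma OG_add: "a \<in> OG G \<Longrightarrow> b \<in> OG G \<Longrightarrow> (\<lambda>g. a g + b g) \<in> OG G" unfolding OG_def by simp
lemma OG_scal: "a \<in> OG G \<Longrightarrow> (\<lambda>g. c * a g) \<in> OG G" unfolding OG_def by simp
lemma OG_diff: "a \<in> OG G \<Longrightarrow> b \<in> OG G \<Longrightarrow> (\<lambda>g. a g - b g) \<in> OG G" unfolding OG_def by simp
lemma OG_sum: "(\<And>i. i \<in> A \<Longrightarrow> f i \<in> OG G) \<Longrightarrow> (\<lambda>g. \<Sum>i\<in>A. f i g) \<in> OG G"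
  unfolding OG_def by simp

lemma fix_add: "a \<in> fixpts G (Delta \<phi> Q) \<Longrightarrow> b \<in> fixpts G (Delta \<phi> Q) \<Longrightarrow>
   (\<lambda>g. a g + b g) \<in> fixpts G (Delta \<phi> Q)"
  unfolding fixpts_Delta_iff by (auto intro!: OG_add)
lemma fix_scal: "a \<in> fixpts G (Delta \<phi> Q) \<Longrightarrow> (\<lambda>g. c * a g) \<in> fixpts G (Delta \<phi> Q)"
  unfolding fixpts_Delta_iff by (auto intro!: OG_scal)
lemma fix_diff: "a \<in> fixpts G (Delta \<phi> Q) \<Longrightarrow> b \<in> fixpts G (Delta \<phi> Q) \<Longrightarrow>
   (\<lambda>g. a g - b g) \<in> fixpts G (Delta \<phi> Q)"
  unfolding fixpts_Delta_iff by (auto intro!: OG_diff)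
lemma fix_sum: "(\<And>i. i \<in> A \<Longrightarrow> f i \<in> fixpts G (Delta \<phi> Q)) \<Longrightarrow>
   (\<lambda>g. \<Sum>i\<in>A. f i g) \<in> fixpts G (Delta \<phi> Q)"
  unfolding fixpts_Delta_iff by (auto intro!: OG_sum)
lemma fix_zero: "(\<lambda>_. 0) \<in> fixpts G (Delta \<phi> Q)"
  unfolding fixpts_Delta_iff OG_def by simp

lemma gdelta_fix: assumes x: "x \<in> carrier G" and c: "conj_aut G x Q = \<phi>"
  shows "(gdelta x :: 'g \<Rightarrow> 'o::comm_ring_1) \<in> fixpts G (Delta \<phi> Q)"
  unfolding fixpts_Delta_iff
proof (intro conjI ballI)
  show "(gdelta x :: 'g \<Rightarrow> 'o) \<in> OG G" unfolding OG_def gdelta_def using x by auto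
  fix u g assume u: "u \<in> Q" and g: "g \<in> carrier G"
  have "inv (\<phi> u) \<otimes> g \<otimes> u = x \<longleftrightarrow> g = x"
  proof
    assume e: "inv (\<phi> u) \<otimes> g \<otimes> u = x"
    have "\<phi> u \<otimes> (inv (\<phi> u) \<otimes> g \<otimes> u) \<otimes> inv u = \<phi> u \<otimes> x \<otimes> inv u" using e by simp
    moreover have "\<phi> u \<otimes> (inv (\<phi> u) \<otimes> g \<otimes> u) \<otimes> inv u = g"
      using c conj_aut_apply[OF u, of x] x g Qc[OF u] by (simp add: m_assoc)
    ultimately show "g = x" using fix_pt2[OF x u] c by simp
  next
    assume "g = x" thus "inv (\<phi> u) \<otimes> g \<otimes> u = x" using fix_pt1[OF x u] c by simp
  qed
  thus "(gdelta x :: 'g \<Rightarrow> 'o) (inv (\<phi> u) \<otimes> g \<otimes> u) = gdelta x g" unfolding gdelta_def by simp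
qed

definition canon :: "('o::comm_ring_1 \<Rightarrow> 'k::field) \<Rightarrow> ('g \<Rightarrow> 'k) \<Rightarrow> ('g \<Rightarrow> 'g) \<Rightarrow> 'g \<Rightarrow> 'o" where
  "canon res f = (\<lambda>\<phi> g. if g \<in> carrier G \<and> conj_aut G g Q = \<phi> then rlift res (f g) else 0)"

definition coef :: "('o::comm_ring_1 \<Rightarrow> 'k::field) \<Rightarrow> (('g \<Rightarrow> 'g) \<Rightarrow> 'g \<Rightarrow> 'o) \<Rightarrow> 'g \<Rightarrow> 'k" where
  "coef res F = (\<lambda>x. if x \<in> NK G N Q then res (F (conj_aut G x Q) x) else 0)"

lemma fixed_shift: assumes k: "\<phi> \<in> K" and u: "u \<in> Q" and g: "g \<in> carrier G"
  and e: "conj_aut G g Q = \<phi> \<or> conj_aut G (inv (\<phi> u) \<otimes> g \<otimes> u) Q = \<phi>"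
  shows "inv (\<phi> u) \<otimes> g \<otimes> u = g"
proof -
  define h where "h = inv (\<phi> u) \<otimes> g \<otimes> u"
  have hc: "h \<in> carrier G" unfolding h_def using K_c[OF k u] g Qc[OF u] by simp
  show ?thesis
  proof (cases "conj_aut G g Q = \<phi>")
    case True thus ?thesis using fix_pt1[OF g u] by simp
  next
    case False
    hence ch: "conj_aut G h Q = \<phi>" using e h_def by simp
    have "\<phi> u \<otimes> h \<otimes> inv u = h" using fix_pt2[OF hc u] ch by simp
    moreover have "\<phi> u \<otimes> h \<otimes> inv u = g" unfolding h_def using K_c[OF k u] g Qc[OF u] by (simp add: m_assoc)
    ultimately show ?thesis unfolding h_def by simp
  qed
qed

lemma canon_fam: "canon res f \<in> br_fam G N Q"
  unfolding br_fam_def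
proof (intro CollectI ballI)
  fix \<phi> assume k: "\<phi> \<in> K"
  show "canon res f \<phi> \<in> fixpts G (Delta \<phi> Q)" unfolding fixpts_Delta_iff
  proof (intro conjI ballI)
    show "canon res f \<phi> \<in> OG G" unfolding OG_def canon_def by simp
    fix u g assume u: "u \<in> Q" and g: "g \<in> carrier G"
    have hc: "inv (\<phi> u) \<otimes> g \<otimes> u \<in> carrier G" using K_c[OF k u] g Qc[OF u] by simp
    show "canon res f \<phi> (inv (\<phi> u) \<otimes> g \<otimes> u) = canon res f \<phi> g"
    proof (cases "conj_aut G g Q = \<phi> \<or> conj_aut G (inv (\<phi> u) \<otimes> g \<otimes> u) Q = \<phi>")
      case True thus ?thesis using fixed_shift[OF k u g True] by simp
    next
      case False thus ?thesis unfolding canon_def by auto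
    qed
  qed
qed

end



locale pbr = pb G N Q p n for G :: "('g,'b) monoid_scheme" (structure) and N Q p n +
  fixes res :: "'o::comm_ring_1 \<Rightarrow> 'k::field"
  assumes resm: "residue_map res" and kch: "CHAR('k) = p"
begin

lemma p_zero: "p dvd m \<Longrightarrow> (of_nat m :: 'k) = 0"
  using kch by (simp add: of_nat_eq_0_iff_char_dvd)

abbreviation "Cs \<phi> R \<equiv> {t <#\<^bsub>G \<times>\<times> G\<^esub> R | t. t \<in> Delta \<phi> Q}"

lemma Cs_rep: assumes k: "\<phi> \<in> K" and R: "subgroup R (G \<times>\<times> G)" "R \<subseteq> Delta \<phi> Q"
  and C: "C \<in> Cs \<phi> R"
  shows "(SOME t. t \<in> C) \<in> Delta \<phi> Q \<and> C = (SOME t. t \<in> C) <#\<^bsub>G \<times>\<times> G\<^esub> R"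
proof -
  interpret GG: group "G \<times>\<times> G" by (rule GG)
  obtain t0 where t0: "t0 \<in> Delta \<phi> Q" "C = t0 <#\<^bsub>G \<times>\<times> G\<^esub> R" using C by blast
  have DS: "subgroup (Delta \<phi> Q) (G \<times>\<times> G)" by (rule Delta_sub[OF k])
  have t0c: "t0 \<in> carrier (G \<times>\<times> G)" using t0(1) subgroup.mem_carrier[OF DS] by blast
  have "t0 \<in> C" using GG.lcos_self[OF t0c R(1)] t0 by simp
  hence sC: "(SOME t. t \<in> C) \<in> C" by (rule someI)
  then obtain r where r: "r \<in> R" "(SOME t. t \<in> C) = t0 \<otimes>\<^bsub>G \<times>\<times> G\<^esub> r"
    using t0(2) unfolding l_coset_def by blast
  have "r \<in> Delta \<phi> Q" using r(1) R(2) by blast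
  hence "t0 \<otimes>\<^bsub>G \<times>\<times> G\<^esub> r \<in> Delta \<phi> Q" by (rule subgroup.m_closed[OF DS t0(1)])
  hence "(SOME t. t \<in> C) \<in> Delta \<phi> Q" using r(2) by simp
  moreover have "C = (SOME t. t \<in> C) <#\<^bsub>G \<times>\<times> G\<^esub> R"
    using GG.l_repr_independence[OF _ t0c R(1)] sC t0(2) by simp
  ultimately show ?thesis by blast
qed

lemma card_Cs_dvd: assumes k: "\<phi> \<in> K" and R: "subgroup R (G \<times>\<times> G)" "R \<subset> Delta \<phi> Q"
  shows "p dvd card (Cs \<phi> R)"
proof -
  interpret GG: group "G \<times>\<times> G" by (rule GG)
  define D where "D = (G \<times>\<times> G)\<lparr>carrier := Delta \<phi> Q\<rparr>"
  have DS: "subgroup (Delta \<phi> Q) (G \<times>\<times> G)" by (rule Delta_sub[OF k])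
  have gD: "group D" unfolding D_def by (rule subgroup.subgroup_is_group[OF DS GG.is_group])
  have RD: "subgroup R D" unfolding D_def using GG.subgroup_incl[OF R(1) DS] R(2) by auto
  have fD: "finite (carrier D)" unfolding D_def using fin_Delta by simp
  have lc: "lcosets\<^bsub>D\<^esub> R = Cs \<phi> R" unfolding LCOSETS_def D_def by auto
  have eq: "card (Cs \<phi> R) * card R = p ^ n"
    using group.l_lagrange[OF gD fD RD] lc card_Delta Qcard unfolding order_def D_def by simp
  hence "card (Cs \<phi> R) dvd p ^ n" by (intro dvdI[where k="card R"]) simp
  then obtain i where i: "i \<le> n" "card (Cs \<phi> R) = p ^ i" using divides_primepow_nat[OF pp] by blast
  have "i \<noteq> 0"
  proof
    assume "i = 0"
    hence "card R = card (Delta \<phi> Q)" using eq i card_Delta Qcard by simp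
    hence "R = Delta \<phi> Q" using R(2) fin_Delta card_subset_eq[of "Delta \<phi> Q" R] by auto
    thus False using R(2) by simp
  qed
  thus ?thesis using i by simp
qed

lemma trace_at_fixed: assumes k: "\<phi> \<in> K" and R: "subgroup R (G \<times>\<times> G)" "R \<subseteq> Delta \<phi> Q"
  and x: "x \<in> carrier G" "conj_aut G x Q = \<phi>"
  shows "trace G (Delta \<phi> Q) R c x = of_nat (card (Cs \<phi> R)) * c x"
proof -
  have "biact G (SOME t. t \<in> C) c x = c x" if C: "C \<in> Cs \<phi> R" for C
  proof -
    have "(SOME t. t \<in> C) \<in> Delta \<phi> Q" using Cs_rep[OF k R C] by blast
    then obtain u where u: "u \<in> Q" "(SOME t. t \<in> C) = (\<phi> u, u)" unfolding Delta_def by blast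
    show ?thesis using u biact_apply[OF x(1), of "\<phi> u" u c] fix_pt1[OF x(1) u(1)] x(2) by simp
  qed
  hence "trace G (Delta \<phi> Q) R c x = (\<Sum>C\<in>Cs \<phi> R. c x)" unfolding trace_def by simp
  thus ?thesis by simp
qed

lemma ker_coef: assumes k: "\<phi> \<in> K" and b: "b \<in> brauer_ker G Q \<phi>"
  and x: "x \<in> carrier G" "conj_aut G x Q = \<phi>"
  shows "res (b x) = 0"
proof -
  define Gens :: "('g \<Rightarrow> 'o) set" where "Gens = (\<Union>R\<in>{R. subgroup R (G \<times>\<times> G) \<and> R \<subset> Delta \<phi> Q}. trace G (Delta \<phi> Q) R ` fixpts G R)
      \<union> {(\<lambda>g. j * a g) | j a. j \<in> jac_rad \<and> a \<in> fixpts G (Delta \<phi> Q)}"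
  obtain T and r :: "('g \<Rightarrow> 'o) \<Rightarrow> 'o" where T: "finite T" "T \<subseteq> Gens" and bb: "b = (\<lambda>x. \<Sum>a\<in>T. r a * a x)"
    using b unfolding brauer_ker_def lin_span_def Gens_def by blast
  have g0: "res (a x) = 0" if a: "a \<in> Gens" for a
  proof -
    show ?thesis
    proof (cases "a \<in> {(\<lambda>g. j * a g) | j a. j \<in> jac_rad \<and> a \<in> fixpts G (Delta \<phi> Q)}")
      case True
      then obtain j a' where ja: "j \<in> jac_rad" "a = (\<lambda>g. j * a' g)" by blast
      thus ?thesis using res_mult[OF resm] res_J[OF resm] by simp
    next
      case False
      then obtain R c where R: "subgroup R (G \<times>\<times> G)" "R \<subset> Delta \<phi> Q" and ac: "a = trace G (Delta \<phi> Q) R c"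
        using a unfolding Gens_def by blast
      have "a x = of_nat (card (Cs \<phi> R)) * c x" using trace_at_fixed[OF k R(1) _ x] R(2) ac by auto
      hence "res (a x) = of_nat (card (Cs \<phi> R)) * res (c x)"
        using res_mult[OF resm] res_of_nat[OF resm] by simp
      thus ?thesis using p_zero[OF card_Cs_dvd[OF k R]] by simp
    qed
  qed
  have "res (b x) = (\<Sum>a\<in>T. res (r a) * res (a x))"
    unfolding bb using res_sum[OF resm, of "\<lambda>a. r a * a x" T] res_mult[OF resm] by simp
  also have "\<dots> = 0" using g0 T(2) by (auto intro!: sum.neutral)
  finally show ?thesis .
qed

end



context pbr begin

definition Rs :: "('g \<Rightarrow> 'g) \<Rightarrow> 'g \<Rightarrow> ('g \<times> 'g) set" where
  "Rs \<phi> x0 = {(\<phi> u, u) | u. u \<in> Q \<and> \<phi> u \<otimes> x0 \<otimes> inv u = x0}"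

definition mm :: "'g \<Rightarrow> 'g \<times> 'g \<Rightarrow> 'g" where
  "mm x0 t = fst t \<otimes> x0 \<otimes> inv (snd t)"

lemma stab_inv: "a \<in> carrier G \<Longrightarrow> u \<in> carrier G \<Longrightarrow> x \<in> carrier G \<Longrightarrow> a \<otimes> x \<otimes> inv u = x
   \<Longrightarrow> inv a \<otimes> x \<otimes> u = x"
proof -
  assume c: "a \<in> carrier G" "u \<in> carrier G" "x \<in> carrier G" and e: "a \<otimes> x \<otimes> inv u = x"
  have "inv a \<otimes> x \<otimes> u = inv a \<otimes> (a \<otimes> x \<otimes> inv u) \<otimes> u" using e by simp
  also have "\<dots> = x" using c by (simp add: m_assoc)
  finally show ?thesis .
qed

lemma stab_mult: "a \<in> carrier G \<Longrightarrow> u \<in> carrier G \<Longrightarrow> b \<in> carrier G \<Longrightarrow> v \<in> carrier G \<Longrightarrow>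
   x \<in> carrier G \<Longrightarrow> b \<otimes> x \<otimes> inv v = y \<Longrightarrow> (a \<otimes> b) \<otimes> x \<otimes> inv (u \<otimes> v) = a \<otimes> y \<otimes> inv u"
  by (auto simp: inv_mult_group m_assoc)

lemma Rs_sub: assumes k: "\<phi> \<in> K" and x0: "x0 \<in> carrier G"
  shows "subgroup (Rs \<phi> x0) (G \<times>\<times> G)"
proof (rule group.subgroupI[OF GG])
  show "Rs \<phi> x0 \<subseteq> carrier (G \<times>\<times> G)" unfolding Rs_def using K_c[OF k] Qc by auto
  have "\<phi> \<one> \<otimes> x0 \<otimes> inv \<one> = x0" using K_one[OF k] x0 by simp
  thus "Rs \<phi> x0 \<noteq> {}" unfolding Rs_def using Q_one by auto
  fix a assume "a \<in> Rs \<phi> x0"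
  then obtain u where u: "u \<in> Q" "a = (\<phi> u, u)" "\<phi> u \<otimes> x0 \<otimes> inv u = x0" unfolding Rs_def by auto
  have "inv\<^bsub>G \<times>\<times> G\<^esub> a = (inv (\<phi> u), inv u)" using u K_c[OF k u(1)] Qc[OF u(1)]
    by (simp add: inv_DirProd[OF is_group is_group])
  also have "\<dots> = (\<phi> (inv u), inv u)" using K_inv[OF k u(1)] by simp
  finally have e: "inv\<^bsub>G \<times>\<times> G\<^esub> a = (\<phi> (inv u), inv u)" .
  have "\<phi> (inv u) \<otimes> x0 \<otimes> inv (inv u) = x0"
    using stab_inv[OF K_c[OF k u(1)] Qc[OF u(1)] x0 u(3)] K_inv[OF k u(1)] Qc[OF u(1)] by simp
  thus "inv\<^bsub>G \<times>\<times> G\<^esub> a \<in> Rs \<phi> x0" unfolding Rs_def using e Q_inv[OF u(1)] by auto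
next
  fix a b assume "a \<in> Rs \<phi> x0" "b \<in> Rs \<phi> x0"
  then obtain u v where u: "u \<in> Q" "a = (\<phi> u, u)" "\<phi> u \<otimes> x0 \<otimes> inv u = x0"
    and v: "v \<in> Q" "b = (\<phi> v, v)" "\<phi> v \<otimes> x0 \<otimes> inv v = x0"
    unfolding Rs_def by auto
  have "\<phi> (u \<otimes> v) \<otimes> x0 \<otimes> inv (u \<otimes> v) = x0"
    using stab_mult[OF K_c[OF k u(1)] Qc[OF u(1)] K_c[OF k v(1)] Qc[OF v(1)] x0 v(3)] u(3)
      K_hom[OF k u(1) v(1)] by simp
  moreover have "a \<otimes>\<^bsub>G \<times>\<times> G\<^esub> b = (\<phi> (u \<otimes> v), u \<otimes> v)" using u v K_hom[OF k u(1) v(1)] by simp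
  ultimately show "a \<otimes>\<^bsub>G \<times>\<times> G\<^esub> b \<in> Rs \<phi> x0" unfolding Rs_def using Q_m[OF u(1) v(1)] by auto
qed

lemma Rs_Delta: "Rs \<phi> x0 \<subseteq> Delta \<phi> Q" unfolding Rs_def Delta_def by auto

lemma delta_fixR: assumes k: "\<phi> \<in> K" and x0: "x0 \<in> carrier G"
  shows "(gdelta x0 :: 'g \<Rightarrow> 'o) \<in> fixpts G (Rs \<phi> x0)"
  unfolding fixpts_def
proof (intro CollectI conjI ballI)
  show "(gdelta x0 :: 'g \<Rightarrow> 'o) \<in> OG G" unfolding OG_def gdelta_def using x0 by auto
  fix r assume "r \<in> Rs \<phi> x0"
  then obtain u where u: "u \<in> Q" "r = (\<phi> u, u)" "\<phi> u \<otimes> x0 \<otimes> inv u = x0" unfolding Rs_def by auto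
  show "biact G r (gdelta x0) = (gdelta x0 :: 'g \<Rightarrow> 'o)"
  proof
    fix g show "biact G r (gdelta x0) g = (gdelta x0 :: 'g \<Rightarrow> 'o) g"
    proof (cases "g \<in> carrier G")
      case False thus ?thesis using biact_out[OF False, of r "gdelta x0"] x0 unfolding gdelta_def by auto
    next
      case True
      have iff: "inv (\<phi> u) \<otimes> g \<otimes> u = x0 \<longleftrightarrow> g = x0"
      proof
        assume e: "inv (\<phi> u) \<otimes> g \<otimes> u = x0"
        have "g = \<phi> u \<otimes> (inv (\<phi> u) \<otimes> g \<otimes> u) \<otimes> inv u"
          using True K_c[OF k u(1)] Qc[OF u(1)] by (simp add: m_assoc)
        thus "g = x0" using e u(3) by simp
      next
        assume "g = x0"
        thus "inv (\<phi> u) \<otimes> g \<otimes> u = x0" using stab_inv[OF K_c[OF k u(1)] Qc[OF u(1)] x0 u(3)] by simp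
      qed
      have e1: "biact G r (gdelta x0) g = (gdelta x0 :: 'g \<Rightarrow> 'o) (inv (\<phi> u) \<otimes> g \<otimes> u)"
        using biact_apply[OF True] u(2) by simp
      have e2: "(gdelta x0 :: 'g \<Rightarrow> 'o) (inv (\<phi> u) \<otimes> g \<otimes> u) = gdelta x0 g"
        unfolding gdelta_def by (simp only: iff)
      show ?thesis using e1 e2 by simp
    qed
  qed
qed

lemma biact_delta: assumes x0: "x0 \<in> carrier G" and c: "fst t \<in> carrier G" "snd t \<in> carrier G"
  shows "biact G t (gdelta x0 :: 'g \<Rightarrow> 'o) g = (if g = mm x0 t then 1 else 0)"
proof (cases "g \<in> carrier G")
  case False
  have "mm x0 t \<in> carrier G" unfolding mm_def using x0 c by simp
  thus ?thesis using False biact_out[OF False, of t "gdelta x0"] by auto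
next
  case True
  obtain v u where t: "t = (v, u)" by (cases t)
  have iff: "inv v \<otimes> g \<otimes> u = x0 \<longleftrightarrow> g = v \<otimes> x0 \<otimes> inv u"
  proof
    assume e: "inv v \<otimes> g \<otimes> u = x0"
    have "g = v \<otimes> (inv v \<otimes> g \<otimes> u) \<otimes> inv u" using True c t by (simp add: m_assoc)
    thus "g = v \<otimes> x0 \<otimes> inv u" using e by simp
  next
    assume "g = v \<otimes> x0 \<otimes> inv u"
    thus "inv v \<otimes> g \<otimes> u = x0" using c t x0 by (simp add: m_assoc)
  qed
  have e1: "biact G t (gdelta x0) g = (gdelta x0 :: 'g \<Rightarrow> 'o) (inv v \<otimes> g \<otimes> u)"
    using biact_apply[OF True] t by simp
  have e2: "(gdelta x0 :: 'g \<Rightarrow> 'o) (inv v \<otimes> g \<otimes> u) = (if g = mm x0 t then 1 else 0)"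
    unfolding gdelta_def mm_def t fst_conv snd_conv by (simp only: iff)
  show ?thesis using e1 e2 by simp
qed

lemma mm_R: assumes k: "\<phi> \<in> K" and x0: "x0 \<in> carrier G" and t: "t \<in> carrier (G \<times>\<times> G)"
  and r: "r \<in> Rs \<phi> x0" shows "mm x0 (t \<otimes>\<^bsub>G \<times>\<times> G\<^esub> r) = mm x0 t"
proof -
  obtain u where u: "u \<in> Q" "r = (\<phi> u, u)" "\<phi> u \<otimes> x0 \<otimes> inv u = x0" using r unfolding Rs_def by auto
  obtain a b where ab: "t = (a, b)" by (cases t)
  have abc: "a \<in> carrier G" "b \<in> carrier G" using t ab by auto
  show ?thesis unfolding mm_def using ab u
    stab_mult[OF abc(1) abc(2) K_c[OF k u(1)] Qc[OF u(1)] x0 u(3)] by simp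
qed

lemma M_bij: assumes k: "\<phi> \<in> K" and x0: "x0 \<in> carrier G"
  shows "bij_betw (\<lambda>C. mm x0 (SOME t. t \<in> C)) (Cs \<phi> (Rs \<phi> x0)) {\<phi> u \<otimes> x0 \<otimes> inv u | u. u \<in> Q}"
proof -
  interpret GG: group "G \<times>\<times> G" by (rule GG)
  let ?R = "Rs \<phi> x0"
  have RS: "subgroup ?R (G \<times>\<times> G)" by (rule Rs_sub[OF k x0])
  have RD: "?R \<subseteq> Delta \<phi> Q" by (rule Rs_Delta)
  have DS: "subgroup (Delta \<phi> Q) (G \<times>\<times> G)" by (rule Delta_sub[OF k])
  have rep: "(SOME t. t \<in> C) \<in> Delta \<phi> Q \<and> C = (SOME t. t \<in> C) <#\<^bsub>G \<times>\<times> G\<^esub> ?R"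
    if "C \<in> Cs \<phi> ?R" for C using Cs_rep[OF k RS RD that] .
  show ?thesis unfolding bij_betw_def
  proof
    show "inj_on (\<lambda>C. mm x0 (SOME t. t \<in> C)) (Cs \<phi> ?R)"
    proof (rule inj_onI)
      fix C1 C2 assume C1: "C1 \<in> Cs \<phi> ?R" and C2: "C2 \<in> Cs \<phi> ?R"
        and e: "mm x0 (SOME t. t \<in> C1) = mm x0 (SOME t. t \<in> C2)"
      obtain u1 where u1: "u1 \<in> Q" "(SOME t. t \<in> C1) = (\<phi> u1, u1)" using rep[OF C1] unfolding Delta_def by blast
      obtain u2 where u2: "u2 \<in> Q" "(SOME t. t \<in> C2) = (\<phi> u2, u2)" using rep[OF C2] unfolding Delta_def by blast
      have c1: "\<phi> u1 \<in> carrier G" "u1 \<in> carrier G" using K_c[OF k u1(1)] Qc[OF u1(1)] by auto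
      have c2: "\<phi> u2 \<in> carrier G" "u2 \<in> carrier G" using K_c[OF k u2(1)] Qc[OF u2(1)] by auto
      have ee: "\<phi> u1 \<otimes> x0 \<otimes> inv u1 = \<phi> u2 \<otimes> x0 \<otimes> inv u2" using e u1 u2 unfolding mm_def by simp
      define w where "w = inv u1 \<otimes> u2"
      have wQ: "w \<in> Q" unfolding w_def using Q_m[OF Q_inv[OF u1(1)] u2(1)] .
      have pw: "\<phi> w = inv (\<phi> u1) \<otimes> \<phi> u2"
        unfolding w_def using K_hom[OF k Q_inv[OF u1(1)] u2(1)] K_inv[OF k u1(1)] by simp
      have "\<phi> w \<otimes> x0 \<otimes> inv w = inv (\<phi> u1) \<otimes> (\<phi> u2 \<otimes> x0 \<otimes> inv u2) \<otimes> u1"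
        using pw c1 c2 x0 unfolding w_def by (simp add: inv_mult_group m_assoc)
      also have "\<dots> = x0" using ee[symmetric] c1 x0 by (simp add: m_assoc)
      finally have wfix: "\<phi> w \<otimes> x0 \<otimes> inv w = x0" .
      have "inv\<^bsub>G \<times>\<times> G\<^esub> (\<phi> u1, u1) \<otimes>\<^bsub>G \<times>\<times> G\<^esub> (\<phi> u2, u2) = (\<phi> w, w)"
        using c1 c2 pw unfolding w_def by (simp add: inv_DirProd[OF is_group is_group])
      hence "inv\<^bsub>G \<times>\<times> G\<^esub> (\<phi> u1, u1) \<otimes>\<^bsub>G \<times>\<times> G\<^esub> (\<phi> u2, u2) \<in> ?R"
        using wfix wQ unfolding Rs_def by auto
      hence "(\<phi> u2, u2) \<in> (\<phi> u1, u1) <#\<^bsub>G \<times>\<times> G\<^esub> ?R"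
        using subgroup.lcos_module_rev[OF RS GG.is_group] c1 c2 by simp
      hence "(\<phi> u1, u1) <#\<^bsub>G \<times>\<times> G\<^esub> ?R = (\<phi> u2, u2) <#\<^bsub>G \<times>\<times> G\<^esub> ?R"
        using GG.l_repr_independence[OF _ _ RS] c1 by simp
      thus "C1 = C2" using rep[OF C1] rep[OF C2] u1 u2 by simp
    qed
    show "(\<lambda>C. mm x0 (SOME t. t \<in> C)) ` Cs \<phi> ?R = {\<phi> u \<otimes> x0 \<otimes> inv u | u. u \<in> Q}"
    proof
      show "(\<lambda>C. mm x0 (SOME t. t \<in> C)) ` Cs \<phi> ?R \<subseteq> {\<phi> u \<otimes> x0 \<otimes> inv u | u. u \<in> Q}"
      proof
        fix y assume "y \<in> (\<lambda>C. mm x0 (SOME t. t \<in> C)) ` Cs \<phi> ?R"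
        then obtain C where C: "C \<in> Cs \<phi> ?R" "y = mm x0 (SOME t. t \<in> C)" by blast
        obtain u where u: "u \<in> Q" "(SOME t. t \<in> C) = (\<phi> u, u)" using rep[OF C(1)] unfolding Delta_def by blast
        show "y \<in> {\<phi> u \<otimes> x0 \<otimes> inv u | u. u \<in> Q}" using C u unfolding mm_def by auto
      qed
      show "{\<phi> u \<otimes> x0 \<otimes> inv u | u. u \<in> Q} \<subseteq> (\<lambda>C. mm x0 (SOME t. t \<in> C)) ` Cs \<phi> ?R"
      proof
        fix y assume "y \<in> {\<phi> u \<otimes> x0 \<otimes> inv u | u. u \<in> Q}"
        then obtain u where u: "u \<in> Q" "y = \<phi> u \<otimes> x0 \<otimes> inv u" by blast
        define C where "C = (\<phi> u, u) <#\<^bsub>G \<times>\<times> G\<^esub> ?R"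
        have t0D: "(\<phi> u, u) \<in> Delta \<phi> Q" unfolding Delta_def using u by auto
        have C: "C \<in> Cs \<phi> ?R" unfolding C_def using t0D by blast
        have t0c: "(\<phi> u, u) \<in> carrier (G \<times>\<times> G)" using K_c[OF k u(1)] Qc[OF u(1)] by simp
        have "(\<phi> u, u) \<in> C" unfolding C_def using GG.lcos_self[OF t0c RS] .
        hence "(SOME t. t \<in> C) \<in> C" by (rule someI)
        then obtain r where r: "r \<in> ?R" "(SOME t. t \<in> C) = (\<phi> u, u) \<otimes>\<^bsub>G \<times>\<times> G\<^esub> r"
          unfolding C_def l_coset_def by blast
        have "mm x0 (SOME t. t \<in> C) = mm x0 (\<phi> u, u)" using r mm_R[OF k x0 t0c r(1)] by simp
        also have "\<dots> = y" using u unfolding mm_def by simp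
        finally show "y \<in> (\<lambda>C. mm x0 (SOME t. t \<in> C)) ` Cs \<phi> ?R" using C by force
      qed
    qed
  qed
qed

lemma trace_delta: assumes k: "\<phi> \<in> K" and x0: "x0 \<in> carrier G"
  shows "trace G (Delta \<phi> Q) (Rs \<phi> x0) (gdelta x0 :: 'g \<Rightarrow> 'o) g
       = (if g \<in> {\<phi> u \<otimes> x0 \<otimes> inv u | u. u \<in> Q} then 1 else 0)"
proof -
  let ?R = "Rs \<phi> x0"
  have RS: "subgroup ?R (G \<times>\<times> G)" by (rule Rs_sub[OF k x0])
  have RD: "?R \<subseteq> Delta \<phi> Q" by (rule Rs_Delta)
  have "biact G (SOME t. t \<in> C) (gdelta x0 :: 'g \<Rightarrow> 'o) g = (if g = mm x0 (SOME t. t \<in> C) then 1 else 0)"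
    if C: "C \<in> Cs \<phi> ?R" for C
  proof -
    obtain u where u: "u \<in> Q" "(SOME t. t \<in> C) = (\<phi> u, u)"
      using Cs_rep[OF k RS RD C] unfolding Delta_def by blast
    show ?thesis using biact_delta[OF x0, of "(\<phi> u, u)"] K_c[OF k u(1)] Qc[OF u(1)] u by simp
  qed
  hence "trace G (Delta \<phi> Q) ?R (gdelta x0 :: 'g \<Rightarrow> 'o) g
      = (\<Sum>C\<in>Cs \<phi> ?R. (\<lambda>y. if g = y then 1 else 0) (mm x0 (SOME t. t \<in> C)))"
    unfolding trace_def by simp
  also have "\<dots> = (\<Sum>y\<in>{\<phi> u \<otimes> x0 \<otimes> inv u | u. u \<in> Q}. if g = y then (1::'o) else 0)"
    by (rule sum.reindex_bij_betw[OF M_bij[OF k x0]])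
  also have "\<dots> = (if g \<in> {\<phi> u \<otimes> x0 \<otimes> inv u | u. u \<in> Q} then 1 else 0)"
  proof -
    have "finite {\<phi> u \<otimes> x0 \<otimes> inv u | u. u \<in> Q}" using finQ by simp
    thus ?thesis by (simp add: sum.delta)
  qed
  finally show ?thesis .
qed

end



context pbr begin

definition act :: "('g \<Rightarrow> 'g) \<Rightarrow> 'g \<Rightarrow> 'g \<Rightarrow> 'g" where
  "act \<phi> = (\<lambda>u. \<lambda>y\<in>carrier G. \<phi> u \<otimes> y \<otimes> inv u)"

abbreviation "HQ \<equiv> G\<lparr>carrier := Q\<rparr>"

lemma HQ_group: "group HQ" by (rule subgroup.subgroup_is_group[OF Qs is_group])

lemma act_ga: assumes k: "\<phi> \<in> K" shows "group_action HQ (carrier G) (act \<phi>)"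
  unfolding act_def
proof (rule mk_group_action[OF HQ_group])
  show "\<phi> h \<otimes> s \<otimes> inv h \<in> carrier G" if "h \<in> carrier HQ" "s \<in> carrier G" for h s
    using that K_c[OF k] Qc by simp
  show "\<phi> \<one>\<^bsub>HQ\<^esub> \<otimes> s \<otimes> inv \<one>\<^bsub>HQ\<^esub> = s" if "s \<in> carrier G" for s
    using that K_one[OF k] by simp
  show "\<phi> (h1 \<otimes>\<^bsub>HQ\<^esub> h2) \<otimes> s \<otimes> inv (h1 \<otimes>\<^bsub>HQ\<^esub> h2) = \<phi> h1 \<otimes> (\<phi> h2 \<otimes> s \<otimes> inv h2) \<otimes> inv h1"
    if "h1 \<in> carrier HQ" "h2 \<in> carrier HQ" "s \<in> carrier G" for h1 h2 s
    using that K_hom[OF k] K_c[OF k] Qc by (simp add: inv_mult_group m_assoc)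
qed

lemma orbit_act: "x \<in> carrier G \<Longrightarrow> orbit HQ (act \<phi>) x = {\<phi> u \<otimes> x \<otimes> inv u | u. u \<in> Q}"
  unfolding orbit_def act_def by auto

lemma ker_of_fix: assumes k: "\<phi> \<in> K" and a: "a \<in> fixpts G (Delta \<phi> Q)"
  and z: "\<And>x. x \<in> carrier G \<Longrightarrow> conj_aut G x Q = \<phi> \<Longrightarrow> res (a x) = 0"
  shows "a \<in> brauer_ker G Q \<phi>"
proof -
  interpret ga: group_action HQ "carrier G" "act \<phi>" by (rule act_ga[OF k])
  define Os where "Os = orbits HQ (carrier G) (act \<phi>)"
  have aO: "a \<in> OG G" using a unfolding fixpts_def by blast
  have orb_sub: "orb \<subseteq> carrier G" if "orb \<in> Os" for orb
    using that ga.orbits_coverture unfolding Os_def by blast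
  have finOs: "finite Os"
  proof -
    have "Os \<subseteq> Pow (carrier G)" using orb_sub by blast
    moreover have "finite (Pow (carrier G))" using finG by simp
    ultimately show ?thesis by (rule finite_subset)
  qed
  have orb_of: "orb = {\<phi> u \<otimes> y \<otimes> inv u | u. u \<in> Q}" if oy: "orb \<in> Os" "y \<in> orb" for orb y
  proof -
    obtain z0 where z0: "z0 \<in> carrier G" "orb = orbit HQ (act \<phi>) z0" using oy(1) unfolding Os_def orbits_def by blast
    have oz: "orb = {\<phi> u \<otimes> z0 \<otimes> inv u | u. u \<in> Q}" using z0 orbit_act by simp
    obtain v where v: "v \<in> Q" "y = \<phi> v \<otimes> z0 \<otimes> inv v" using oy(2) oz by blast
    have vc: "\<phi> v \<in> carrier G" "v \<in> carrier G" using K_c[OF k v(1)] Qc[OF v(1)] by auto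
    have yc: "y \<in> carrier G" using v(2) vc z0(1) by simp
    have bk: "\<phi> (inv v) \<otimes> y \<otimes> inv (inv v) = z0"
      using v(2) vc z0(1) K_inv[OF k v(1)] by (simp add: m_assoc)
    show ?thesis
    proof
      show "orb \<subseteq> {\<phi> u \<otimes> y \<otimes> inv u | u. u \<in> Q}"
      proof
        fix w assume "w \<in> orb"
        then obtain u where u: "u \<in> Q" "w = \<phi> u \<otimes> z0 \<otimes> inv u" using oz by blast
        have uc: "\<phi> u \<in> carrier G" "u \<in> carrier G" using K_c[OF k u(1)] Qc[OF u(1)] by auto
        have "\<phi> (u \<otimes> inv v) \<otimes> y \<otimes> inv (u \<otimes> inv v) = \<phi> u \<otimes> z0 \<otimes> inv u"
          using stab_mult[OF uc(1) uc(2) K_c[OF k Q_inv[OF v(1)]] Qc[OF Q_inv[OF v(1)]] yc bk]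
            K_hom[OF k u(1) Q_inv[OF v(1)]] by simp
        thus "w \<in> {\<phi> u \<otimes> y \<otimes> inv u | u. u \<in> Q}" using u Q_m[OF u(1) Q_inv[OF v(1)]] by force
      qed
      show "{\<phi> u \<otimes> y \<otimes> inv u | u. u \<in> Q} \<subseteq> orb"
      proof
        fix w assume "w \<in> {\<phi> u \<otimes> y \<otimes> inv u | u. u \<in> Q}"
        then obtain u where u: "u \<in> Q" "w = \<phi> u \<otimes> y \<otimes> inv u" by blast
        have uc: "\<phi> u \<in> carrier G" "u \<in> carrier G" using K_c[OF k u(1)] Qc[OF u(1)] by auto
        have "\<phi> (u \<otimes> v) \<otimes> z0 \<otimes> inv (u \<otimes> v) = \<phi> u \<otimes> y \<otimes> inv u"
          using stab_mult[OF uc(1) uc(2) vc(1) vc(2) z0(1) v(2)[symmetric]]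
            K_hom[OF k u(1) v(1)] by simp
        thus "w \<in> orb" using u oz Q_m[OF u(1) v(1)] by force
      qed
    qed
  qed
  have const: "a y = a x" if oxy: "orb \<in> Os" "x \<in> orb" "y \<in> orb" for orb x y
  proof -
    have xc: "x \<in> carrier G" using orb_sub[OF oxy(1)] oxy(2) by blast
    obtain u where u: "u \<in> Q" "y = \<phi> u \<otimes> x \<otimes> inv u" using orb_of[OF oxy(1,2)] oxy(3) by blast
    show ?thesis using fix_inv2[OF a k u(1) xc] u(2) by simp
  qed
  define rp where "rp orb = (SOME x. x \<in> orb)" for orb :: "'g set"
  have rp: "rp orb \<in> orb" if oO: "orb \<in> Os" for orb
  proof -
    obtain z0 where z0: "z0 \<in> carrier G" "orb = orbit HQ (act \<phi>) z0" using oO unfolding Os_def orbits_def by blast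
    have "z0 \<in> orb" using ga.orbit_refl[OF z0(1)] z0(2) by simp
    thus ?thesis unfolding rp_def by (rule someI)
  qed
  define piece where "piece orb = (\<lambda>g. a (rp orb) * (if g \<in> orb then 1 else 0))" for orb
  have decomp: "a = (\<lambda>g. \<Sum>orb\<in>Os. piece orb g)"
  proof
    fix g
    define h where "h y = (if y = g then a g else 0)" for y
    have "piece orb g = sum h orb" if "orb \<in> Os" for orb
    proof -
      have fo: "finite orb" using orb_sub[OF that] finG by (rule finite_subset)
      have "sum h orb = (if g \<in> orb then a g else 0)" unfolding h_def using fo by (simp add: sum.delta')
      thus ?thesis unfolding piece_def using const[OF that rp[OF that]] by auto
    qed
    hence "(\<Sum>orb\<in>Os. piece orb g) = (\<Sum>orb\<in>Os. sum h orb)" by simp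
    also have "\<dots> = sum h (carrier G)" unfolding Os_def by (rule ga.disjoint_sum[OF finG])
    also have "\<dots> = a g" unfolding h_def using finG aO OG_out by (auto simp: sum.delta')
    finally show "a g = (\<Sum>orb\<in>Os. piece orb g)" by simp
  qed
  have pk: "piece orb \<in> brauer_ker G Q \<phi>" if orb: "orb \<in> Os" for orb
  proof -
    define x0 where "x0 = rp orb"
    have x0o: "x0 \<in> orb" unfolding x0_def using rp[OF orb] .
    have x0c: "x0 \<in> carrier G" using orb_sub[OF orb] x0o by blast
    have oeq: "orb = {\<phi> u \<otimes> x0 \<otimes> inv u | u. u \<in> Q}" using orb_of[OF orb x0o] .
    show ?thesis
    proof (cases "\<forall>u\<in>Q. \<phi> u \<otimes> x0 \<otimes> inv u = x0")
      case True
      have cx: "conj_aut G x0 Q = \<phi>"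
        using fix_pt_conv[OF x0c K_ext[OF k] K_c[OF k]] True by blast
      have jr: "a x0 \<in> jac_rad" using z[OF x0c cx] res_J[OF resm] by simp
      have "orb \<subseteq> {x0}" using oeq True by auto
      hence "orb = {x0}" using x0o by blast
      hence eq: "piece orb = (\<lambda>g. a x0 * gdelta x0 g)"
        unfolding piece_def x0_def[symmetric] gdelta_def by auto
      have "(\<lambda>g. a x0 * gdelta x0 g) \<in> {(\<lambda>g. j * a g) | j a. j \<in> jac_rad \<and> a \<in> fixpts G (Delta \<phi> Q)}"
        using jr gdelta_fix[OF x0c cx] by blast
      hence "(\<lambda>g. a x0 * gdelta x0 g) \<in> (\<Union>R\<in>{R. subgroup R (G \<times>\<times> G) \<and> R \<subset> Delta \<phi> Q}. trace G (Delta \<phi> Q) R ` fixpts G R)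
      \<union> {(\<lambda>g. j * a g) | j a. j \<in> jac_rad \<and> a \<in> fixpts G (Delta \<phi> Q)}" by (rule UnI2)
      from lin_span_gen1[OF this] show ?thesis unfolding brauer_ker_def eq .
    next
      case False
      let ?R = "Rs \<phi> x0"
      have RS: "subgroup ?R (G \<times>\<times> G)" by (rule Rs_sub[OF k x0c])
      obtain u0 where u0: "u0 \<in> Q" "\<phi> u0 \<otimes> x0 \<otimes> inv u0 \<noteq> x0" using False by blast
      have "(\<phi> u0, u0) \<in> Delta \<phi> Q" unfolding Delta_def using u0 by auto
      moreover have "(\<phi> u0, u0) \<notin> ?R"
      proof
        assume "(\<phi> u0, u0) \<in> ?R"
        then obtain u where "(\<phi> u0, u0) = (\<phi> u, u)" "\<phi> u \<otimes> x0 \<otimes> inv u = x0" unfolding Rs_def by blast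
        thus False using u0 by simp
      qed
      ultimately have Rp: "?R \<subset> Delta \<phi> Q" using Rs_Delta by blast
      have tr: "trace G (Delta \<phi> Q) ?R (gdelta x0 :: 'g \<Rightarrow> 'o) \<in> trace G (Delta \<phi> Q) ?R ` fixpts G ?R"
        by (rule imageI[OF delta_fixR[OF k x0c]])
      have eq: "piece orb = (\<lambda>g. a x0 * trace G (Delta \<phi> Q) ?R (gdelta x0 :: 'g \<Rightarrow> 'o) g)"
      proof
        fix g show "piece orb g = a x0 * trace G (Delta \<phi> Q) ?R (gdelta x0 :: 'g \<Rightarrow> 'o) g"
          unfolding piece_def x0_def[symmetric] trace_delta[OF k x0c] oeq[symmetric] by simp
      qed
      have "trace G (Delta \<phi> Q) ?R (gdelta x0 :: 'g \<Rightarrow> 'o) \<in>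
         (\<Union>R\<in>{R. subgroup R (G \<times>\<times> G) \<and> R \<subset> Delta \<phi> Q}. trace G (Delta \<phi> Q) R ` fixpts G R)"
      proof (rule UN_I[of ?R])
        show "?R \<in> {R. subgroup R (G \<times>\<times> G) \<and> R \<subset> Delta \<phi> Q}" using RS Rp by simp
      qed (rule tr)
      hence "trace G (Delta \<phi> Q) ?R (gdelta x0 :: 'g \<Rightarrow> 'o) \<in> (\<Union>R\<in>{R. subgroup R (G \<times>\<times> G) \<and> R \<subset> Delta \<phi> Q}. trace G (Delta \<phi> Q) R ` fixpts G R)
      \<union> {(\<lambda>g. j * a g) | j a. j \<in> jac_rad \<and> a \<in> fixpts G (Delta \<phi> Q)}" by (rule UnI1)
      from lin_span_gen[OF this, of "a x0"] show ?thesis unfolding brauer_ker_def eq .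
    qed
  qed
  have "(\<lambda>g. \<Sum>orb\<in>Os. piece orb g) \<in> brauer_ker G Q \<phi>"
    using lin_span_sum[OF finOs, of piece] pk unfolding brauer_ker_def by blast
  thus ?thesis using decomp by simp
qed

end



context pbr begin

lemma ker_iff: assumes k: "\<phi> \<in> K" and a: "a \<in> fixpts G (Delta \<phi> Q)"
  shows "a \<in> brauer_ker G Q \<phi> \<longleftrightarrow> (\<forall>x\<in>carrier G. conj_aut G x Q = \<phi> \<longrightarrow> res (a x) = 0)"
  using ker_coef[OF k] ker_of_fix[OF k a] by blast

lemma ker_0: "(\<lambda>_. 0) \<in> brauer_ker G Q \<phi>" unfolding brauer_ker_def by (rule lin_span_0)
lemma ker_add: "a \<in> brauer_ker G Q \<phi> \<Longrightarrow> b \<in> brauer_ker G Q \<phi> \<Longrightarrow> (\<lambda>g. a g + b g) \<in> brauer_ker G Q \<phi>"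
  unfolding brauer_ker_def by (rule lin_span_add)
lemma ker_diff: "a \<in> brauer_ker G Q \<phi> \<Longrightarrow> b \<in> brauer_ker G Q \<phi> \<Longrightarrow> (\<lambda>g. a g - b g) \<in> brauer_ker G Q \<phi>"
  unfolding brauer_ker_def by (rule lin_span_diff)

lemma cls_eq_step1: "br_cls G N Q F = br_cls G N Q F' \<longleftrightarrow>
   (\<forall>\<phi>\<in>K. (\<lambda>g. F \<phi> g - F' \<phi> g) \<in> brauer_ker G Q \<phi>)"
proof
  assume e: "br_cls G N Q F = br_cls G N Q F'"
  show "\<forall>\<phi>\<in>K. (\<lambda>g. F \<phi> g - F' \<phi> g) \<in> brauer_ker G Q \<phi>"
  proof
    fix \<phi> assume k: "\<phi> \<in> K"
    have "F \<phi> \<in> {(\<lambda>g. F \<phi> g + i g) | i. i \<in> brauer_ker G Q \<phi>}"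
      by (rule CollectI, rule exI[of _ "\<lambda>_. 0"]) (simp add: ker_0)
    hence "F \<phi> \<in> br_cls G N Q F \<phi>" unfolding br_cls_def using k by simp
    hence "F \<phi> \<in> br_cls G N Q F' \<phi>" using e by simp
    then obtain i where i: "i \<in> brauer_ker G Q \<phi>" "F \<phi> = (\<lambda>g. F' \<phi> g + i g)"
      unfolding br_cls_def using k by auto
    have "(\<lambda>g. F \<phi> g - F' \<phi> g) = i" using i(2) by auto
    thus "(\<lambda>g. F \<phi> g - F' \<phi> g) \<in> brauer_ker G Q \<phi>" using i(1) by simp
  qed
next
  assume H: "\<forall>\<phi>\<in>K. (\<lambda>g. F \<phi> g - F' \<phi> g) \<in> brauer_ker G Q \<phi>"
  show "br_cls G N Q F = br_cls G N Q F'"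
  proof
    fix \<phi>
    show "br_cls G N Q F \<phi> = br_cls G N Q F' \<phi>"
    proof (cases "\<phi> \<in> K")
      case False thus ?thesis unfolding br_cls_def by simp
    next
      case True
      define d where "d = (\<lambda>g. F \<phi> g - F' \<phi> g)"
      have d: "d \<in> brauer_ker G Q \<phi>" using H True unfolding d_def by blast
      have A: "(\<lambda>g. F \<phi> g + i g) \<in> {(\<lambda>g. F' \<phi> g + i g) | i. i \<in> brauer_ker G Q \<phi>}"
        if i: "i \<in> brauer_ker G Q \<phi>" for i
      proof -
        have "(\<lambda>g. F \<phi> g + i g) = (\<lambda>g. F' \<phi> g + (\<lambda>g. d g + i g) g)" unfolding d_def by auto
        thus ?thesis using ker_add[OF d i] by (intro CollectI exI[where x="\<lambda>g. d g + i g"]) simp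
      qed
      have B: "(\<lambda>g. F' \<phi> g + i g) \<in> {(\<lambda>g. F \<phi> g + i g) | i. i \<in> brauer_ker G Q \<phi>}"
        if i: "i \<in> brauer_ker G Q \<phi>" for i
      proof -
        have "(\<lambda>g. F' \<phi> g + i g) = (\<lambda>g. F \<phi> g + (\<lambda>g. i g - d g) g)" unfolding d_def by auto
        thus ?thesis using ker_diff[OF i d] by (intro CollectI exI[where x="\<lambda>g. i g - d g"]) simp
      qed
      show ?thesis unfolding br_cls_def using True A B by auto
    qed
  qed
qed

lemma cls_eq_iff: assumes F: "F \<in> br_fam G N Q" and F': "F' \<in> br_fam G N Q"
  shows "br_cls G N Q F = br_cls G N Q F' \<longleftrightarrow> coef res F = coef res F'"
proof -
  have s2: "(\<lambda>g. F \<phi> g - F' \<phi> g) \<in> brauer_ker G Q \<phi> \<longleftrightarrow>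
     (\<forall>x\<in>carrier G. conj_aut G x Q = \<phi> \<longrightarrow> res (F \<phi> x) = res (F' \<phi> x))" if k: "\<phi> \<in> K" for \<phi>
  proof -
    have fx: "(\<lambda>g. F \<phi> g - F' \<phi> g) \<in> fixpts G (Delta \<phi> Q)"
      using F F' k unfolding br_fam_def by (auto intro: fix_diff)
    show ?thesis unfolding ker_iff[OF k fx] by (simp add: res_diff[OF resm])
  qed
  have s3: "(\<forall>\<phi>\<in>K. \<forall>x\<in>carrier G. conj_aut G x Q = \<phi> \<longrightarrow> res (F \<phi> x) = res (F' \<phi> x))
      \<longleftrightarrow> coef res F = coef res F'"
  proof
    assume h: "\<forall>\<phi>\<in>K. \<forall>x\<in>carrier G. conj_aut G x Q = \<phi> \<longrightarrow> res (F \<phi> x) = res (F' \<phi> x)"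
    show "coef res F = coef res F'"
    proof
      fix x show "coef res F x = coef res F' x"
        unfolding coef_def using h NK_iff by auto
    qed
  next
    assume h: "coef res F = coef res F'"
    show "\<forall>\<phi>\<in>K. \<forall>x\<in>carrier G. conj_aut G x Q = \<phi> \<longrightarrow> res (F \<phi> x) = res (F' \<phi> x)"
    proof (intro ballI impI)
      fix \<phi> x assume k: "\<phi> \<in> K" and x: "x \<in> carrier G" and c: "conj_aut G x Q = \<phi>"
      have xN: "x \<in> NK G N Q" using NK_iff x c k by simp
      have "coef res F x = coef res F' x" using h by simp
      thus "res (F \<phi> x) = res (F' \<phi> x)" unfolding coef_def using xN c by simp
    qed
  qed
  have "(\<forall>\<phi>\<in>K. (\<lambda>g. F \<phi> g - F' \<phi> g) \<in> brauer_ker G Q \<phi>) \<longleftrightarrow>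
     (\<forall>\<phi>\<in>K. \<forall>x\<in>carrier G. conj_aut G x Q = \<phi> \<longrightarrow> res (F \<phi> x) = res (F' \<phi> x))"
    using s2 by blast
  thus ?thesis using cls_eq_step1[of F F'] s3 by simp
qed

definition psi :: "('g \<Rightarrow> 'k) \<Rightarrow> ('g \<Rightarrow> 'g) \<Rightarrow> ('g \<Rightarrow> 'o) set" where
  "psi f = br_cls G N Q (canon res f)"

lemma coef_canon: "f \<in> kNK G N Q \<Longrightarrow> coef res (canon res f) = f"
proof
  fix x assume f: "f \<in> kNK G N Q"
  show "coef res (canon res f) x = f x"
  proof (cases "x \<in> NK G N Q")
    case True thus ?thesis unfolding coef_def canon_def using NK_c res_rlift[OF resm] by simp
  next
    case False thus ?thesis unfolding coef_def using f unfolding kNK_def by simp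
  qed
qed

lemma coef_kNK: "coef res F \<in> kNK G N Q" unfolding coef_def kNK_def by simp

lemma cls_psi: assumes F: "F \<in> br_fam G N Q" shows "br_cls G N Q F = psi (coef res F)"
proof -
  have "coef res (canon res (coef res F)) = coef res F" by (rule coef_canon[OF coef_kNK])
  thus ?thesis unfolding psi_def using cls_eq_iff[OF F canon_fam[of res "coef res F"]] by simp
qed

lemma psi_coef: "f \<in> kNK G N Q \<Longrightarrow> F \<in> br_fam G N Q \<Longrightarrow> psi f = br_cls G N Q F \<Longrightarrow> f = coef res F"
  unfolding psi_def using cls_eq_iff[OF canon_fam] coef_canon by metis

lemma psi_bij: "bij_betw psi (kNK G N Q) (ext_brauer G N Q)"
  unfolding bij_betw_def
proof
  show "inj_on psi (kNK G N Q)"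
  proof (rule inj_onI)
    fix f h assume f: "f \<in> kNK G N Q" and h: "h \<in> kNK G N Q" and e: "psi f = psi h"
    have "coef res (canon res f) = coef res (canon res h)"
      using e cls_eq_iff[OF canon_fam canon_fam] unfolding psi_def by blast
    thus "f = h" using coef_canon[OF f] coef_canon[OF h] by simp
  qed
  show "psi ` kNK G N Q = ext_brauer G N Q"
  proof
    show "psi ` kNK G N Q \<subseteq> ext_brauer G N Q"
      unfolding ext_brauer_def psi_def using canon_fam by blast
    show "ext_brauer G N Q \<subseteq> psi ` kNK G N Q"
    proof
      fix X :: "('g \<Rightarrow> 'g) \<Rightarrow> ('g \<Rightarrow> 'o) set" assume "X \<in> ext_brauer G N Q"
      then obtain F where F: "F \<in> br_fam G N Q" "X = br_cls G N Q F" unfolding ext_brauer_def by blast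
      show "X \<in> psi ` kNK G N Q" using cls_psi[OF F(1)] F(2) coef_kNK by blast
    qed
  qed
qed

lemma fam_add: "F \<in> br_fam G N Q \<Longrightarrow> H \<in> br_fam G N Q \<Longrightarrow> (\<lambda>\<phi> g. F \<phi> g + H \<phi> g) \<in> br_fam G N Q"
  unfolding br_fam_def by (auto intro: fix_add)

lemma fam_scal: "F \<in> br_fam G N Q \<Longrightarrow> (\<lambda>\<phi> g. c * F \<phi> g) \<in> br_fam G N Q"
  unfolding br_fam_def by (auto intro: fix_scal)

lemma psi_add: assumes f: "f \<in> kNK G N Q" and h: "h \<in> kNK G N Q" and F: "F \<in> br_fam G N Q"
  and H: "H \<in> br_fam G N Q" and e1: "psi f = br_cls G N Q F" and e2: "psi h = br_cls G N Q H"
  shows "psi (\<lambda>x. f x + h x) = br_cls G N Q (\<lambda>\<phi> g. F \<phi> g + H \<phi> g)"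
proof -
  have "(\<lambda>x. f x + h x) = coef res (\<lambda>\<phi> g. F \<phi> g + H \<phi> g)"
    using psi_coef[OF f F e1] psi_coef[OF h H e2] unfolding coef_def
    by (auto simp: res_add[OF resm])
  thus ?thesis using cls_psi[OF fam_add[OF F H]] by simp
qed

lemma psi_scal: assumes f: "f \<in> kNK G N Q" and F: "F \<in> br_fam G N Q" and e1: "psi f = br_cls G N Q F"
  shows "psi (\<lambda>x. res c * f x) = br_cls G N Q (\<lambda>\<phi> g. c * F \<phi> g)"
proof -
  have "(\<lambda>x. res c * f x) = coef res (\<lambda>\<phi> g. c * F \<phi> g)"
    using psi_coef[OF f F e1] unfolding coef_def
    by (auto simp: res_mult[OF resm])
  thus ?thesis using cls_psi[OF fam_scal[OF F]] by simp
qed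

lemma psi_delta: assumes x: "x \<in> NK G N Q"
  shows "psi (gdelta x) = br_cls G N Q (\<lambda>\<phi>. if \<phi> = conj_aut G x Q then gdelta x else (\<lambda>_. 0))"
proof -
  define Dx :: "('g \<Rightarrow> 'g) \<Rightarrow> 'g \<Rightarrow> 'o" where
    "Dx = (\<lambda>\<phi>. if \<phi> = conj_aut G x Q then gdelta x else (\<lambda>_. 0))"
  have xc: "x \<in> carrier G" using NK_c[OF x] .
  have D: "Dx \<in> br_fam G N Q" unfolding br_fam_def Dx_def
    using gdelta_fix[OF xc refl] fix_zero by auto
  have "coef res Dx = gdelta x"
  proof
    fix y show "coef res Dx y = gdelta x y"
      unfolding coef_def Dx_def gdelta_def using x res_one[OF resm] res_zero[OF resm] by auto
  qed
  thus ?thesis using cls_psi[OF D] unfolding Dx_def by simp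
qed

lemma fam_act_in: assumes y: "y \<in> normalizer G Q" and F: "F \<in> br_fam G N Q"
  shows "fam_act G Q y F \<in> br_fam G N Q"
  unfolding br_fam_def
proof (intro CollectI ballI)
  fix \<chi> assume k: "\<chi> \<in> K"
  have yc: "y \<in> carrier G" and y1: "\<And>u. u \<in> Q \<Longrightarrow> y \<otimes> u \<otimes> inv y \<in> Q"
    using y normalizer_iff by auto
  have k': "cj y \<chi> \<in> K" by (rule cj_K[OF y k])
  have Ff: "F (cj y \<chi>) \<in> fixpts G (Delta (cj y \<chi>) Q)" using F k' unfolding br_fam_def by blast
  have fa: "fam_act G Q y F \<chi> = (\<lambda>g. if g \<in> carrier G then F (cj y \<chi>) (y \<otimes> g \<otimes> inv y) else 0)"
    unfolding fam_act_def phi_conj_cj[OF yc] by simp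
  show "fam_act G Q y F \<chi> \<in> fixpts G (Delta \<chi> Q)" unfolding fixpts_Delta_iff fa
  proof (intro conjI ballI)
    show "(\<lambda>g. if g \<in> carrier G then F (cj y \<chi>) (y \<otimes> g \<otimes> inv y) else 0) \<in> OG G" unfolding OG_def by simp
    fix u g assume u: "u \<in> Q" and g: "g \<in> carrier G"
    define w where "w = y \<otimes> u \<otimes> inv y"
    have wQ: "w \<in> Q" unfolding w_def using y1[OF u] .
    have cw: "cj y \<chi> w = y \<otimes> \<chi> u \<otimes> inv y"
      unfolding cj_def w_def using wQ[unfolded w_def] yc Qc[OF u] by (simp add: m_assoc)
    have uc: "u \<in> carrier G" "\<chi> u \<in> carrier G" using Qc[OF u] K_c[OF k u] by auto
    have icw: "inv (cj y \<chi> w) = y \<otimes> inv (\<chi> u) \<otimes> inv y" using cw inv_conj[OF yc uc(2)] by simp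
    have "y \<otimes> (inv (\<chi> u) \<otimes> g \<otimes> u) \<otimes> inv y
        = (y \<otimes> inv (\<chi> u) \<otimes> inv y) \<otimes> (y \<otimes> g \<otimes> inv y) \<otimes> (y \<otimes> u \<otimes> inv y)"
      using yc uc g by (simp add: m_assoc)
    also have "\<dots> = inv (cj y \<chi> w) \<otimes> (y \<otimes> g \<otimes> inv y) \<otimes> w" using icw w_def by simp
    finally have eq: "y \<otimes> (inv (\<chi> u) \<otimes> g \<otimes> u) \<otimes> inv y = inv (cj y \<chi> w) \<otimes> (y \<otimes> g \<otimes> inv y) \<otimes> w" .
    have "F (cj y \<chi>) (inv (cj y \<chi> w) \<otimes> (y \<otimes> g \<otimes> inv y) \<otimes> w) = F (cj y \<chi>) (y \<otimes> g \<otimes> inv y)"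
      using Ff wQ yc g unfolding fixpts_Delta_iff by simp
    thus "(if inv (\<chi> u) \<otimes> g \<otimes> u \<in> carrier G then F (cj y \<chi>) (y \<otimes> (inv (\<chi> u) \<otimes> g \<otimes> u) \<otimes> inv y) else 0) =
       (if g \<in> carrier G then F (cj y \<chi>) (y \<otimes> g \<otimes> inv y) else 0)"
      using eq g uc by simp
  qed
qed

lemma psi_act: assumes y: "y \<in> normalizer G Q" and f: "f \<in> kNK G N Q" and F: "F \<in> br_fam G N Q"
  and e: "psi f = br_cls G N Q F"
  shows "psi (kact G N Q y f) = br_cls G N Q (fam_act G Q y F)"
proof -
  have yc: "y \<in> carrier G" using y normalizer_iff by auto
  have fc: "f = coef res F" by (rule psi_coef[OF f F e])
  have "kact G N Q y f = coef res (fam_act G Q y F)"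
  proof
    fix x show "kact G N Q y f x = coef res (fam_act G Q y F) x"
    proof (cases "x \<in> NK G N Q")
      case False thus ?thesis unfolding kact_def coef_def by simp
    next
      case True
      have xc: "x \<in> carrier G" using NK_c[OF True] .
      have x': "y \<otimes> x \<otimes> inv y \<in> NK G N Q" using NK_conj[OF y True] .
      have "fam_act G Q y F (conj_aut G x Q) x = F (conj_aut G (y \<otimes> x \<otimes> inv y) Q) (y \<otimes> x \<otimes> inv y)"
        unfolding fam_act_def using xc phi_conj_cj[OF yc] cj_conj[OF y xc] by simp
      thus ?thesis unfolding kact_def coef_def fc using True x' by simp
    qed
  qed
  thus ?thesis using cls_psi[OF fam_act_in[OF y F]] by simp
qed

lemma psi_grade: assumes z: "z \<in> NK G N Q"
  shows "psi ` kNK_comp G N Q z = ext_brauer_comp G N Q z"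
proof
  show "psi ` kNK_comp G N Q z \<subseteq> ext_brauer_comp G N Q z"
  proof
    fix X assume "X \<in> psi ` kNK_comp G N Q z"
    then obtain f where f: "f \<in> kNK_comp G N Q z" "X = psi f" by blast
    have nz: "g \<in> carrier G \<and> conj_aut G g Q = conj_aut G z Q \<and> g \<in> N #> z"
      if "canon res f \<phi> g \<noteq> 0" for \<phi> g
    proof -
      have g: "g \<in> carrier G" "conj_aut G g Q = \<phi>" "f g \<noteq> 0"
        using that unfolding canon_def by (auto split: if_splits)
      have "g \<in> CN G N Q #> z" using f(1) g(3) unfolding kNK_comp_def by blast
      thus ?thesis using CN_coset[OF z g(1)] g by simp
    qed
    have c1: "\<forall>\<phi>. \<phi> \<noteq> conj_aut G z Q \<longrightarrow> canon res f \<phi> = (\<lambda>_. 0)"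
    proof (intro allI impI ext)
      fix \<phi> g assume "\<phi> \<noteq> conj_aut G z Q"
      thus "canon res f \<phi> g = 0" using nz[of \<phi> g] unfolding canon_def by (auto split: if_splits)
    qed
    have c2: "\<forall>g. g \<notin> N #> z \<longrightarrow> canon res f (conj_aut G z Q) g = 0" using nz by blast
    show "X \<in> ext_brauer_comp G N Q z" unfolding ext_brauer_comp_def f(2) psi_def
      using canon_fam c1 c2 by blast
  qed
  show "ext_brauer_comp G N Q z \<subseteq> psi ` kNK_comp G N Q z"
  proof
    fix X :: "('g \<Rightarrow> 'g) \<Rightarrow> ('g \<Rightarrow> 'o) set" assume "X \<in> ext_brauer_comp G N Q z"
    then obtain F :: "('g \<Rightarrow> 'g) \<Rightarrow> 'g \<Rightarrow> 'o" where F: "F \<in> br_fam G N Q" "X = br_cls G N Q F"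
      "\<forall>\<phi>. \<phi> \<noteq> conj_aut G z Q \<longrightarrow> F \<phi> = (\<lambda>_. 0)"
      "\<forall>g. g \<notin> N #> z \<longrightarrow> F (conj_aut G z Q) g = 0"
      unfolding ext_brauer_comp_def by blast
    have "coef res F \<in> kNK_comp G N Q z" unfolding kNK_comp_def
    proof (intro CollectI conjI allI impI)
      show "coef res F \<in> kNK G N Q" by (rule coef_kNK)
      fix x assume xn: "x \<notin> CN G N Q #> z"
      show "coef res F x = 0"
      proof (cases "x \<in> NK G N Q")
        case False thus ?thesis unfolding coef_def by simp
      next
        case True
        have xc: "x \<in> carrier G" using NK_c[OF True] .
        have "F (conj_aut G x Q) x = 0"
        proof (cases "conj_aut G x Q = conj_aut G z Q")
          case False thus ?thesis using F(3) by simp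
        next
          case c: True
          hence "x \<notin> N #> z" using xn CN_coset[OF z xc] by simp
          thus ?thesis using F(4) c by simp
        qed
        thus ?thesis unfolding coef_def using res_zero[OF resm] by simp
      qed
    qed
    thus "X \<in> psi ` kNK_comp G N Q z" using cls_psi[OF F(1)] F(2) by blast
  qed
qed

end



context pbr begin

abbreviation "Pairs \<phi> \<equiv> {(\<chi>, \<omega>). \<chi> \<in> K \<and> \<omega> \<in> K \<and> compose Q \<chi> \<omega> = \<phi>}"

lemma fin_Pairs: "finite (Pairs \<phi>)"
proof -
  have "Pairs \<phi> \<subseteq> K \<times> K" by auto
  moreover have "finite (K \<times> K)" using finK by simp
  ultimately show ?thesis by (rule finite_subset)
qed

lemma fam_mult_eq: "fam_mult G N Q F H \<phi> x = (\<Sum>pr\<in>Pairs \<phi>. gconv G (F (fst pr)) (H (snd pr)) x)"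
  unfolding fam_mult_def by (simp add: split_def)

lemma shift_bij: assumes a: "a \<in> carrier G" and b: "b \<in> carrier G"
  shows "bij_betw (\<lambda>y. a \<otimes> y \<otimes> b) (carrier G) (carrier G)"
proof (rule bij_betw_byWitness[where f'="\<lambda>y. inv a \<otimes> y \<otimes> inv b"])
  show "\<forall>y\<in>carrier G. inv a \<otimes> (a \<otimes> y \<otimes> b) \<otimes> inv b = y" using a b by (simp add: m_assoc)
  show "\<forall>y\<in>carrier G. a \<otimes> (inv a \<otimes> y \<otimes> inv b) \<otimes> b = y" using a b by (simp add: m_assoc)
  show "(\<lambda>y. a \<otimes> y \<otimes> b) ` carrier G \<subseteq> carrier G" using a b by auto
  show "(\<lambda>y. inv a \<otimes> y \<otimes> inv b) ` carrier G \<subseteq> carrier G" using a b by auto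
qed

lemma gconv_fix: assumes kc: "\<chi> \<in> K" and kw: "\<omega> \<in> K" and cp: "compose Q \<chi> \<omega> = \<phi>"
  and a: "a \<in> fixpts G (Delta \<chi> Q)" and c: "c \<in> fixpts G (Delta \<omega> Q)"
  and u: "u \<in> Q" and g: "g \<in> carrier G"
  shows "gconv G a c (inv (\<phi> u) \<otimes> g \<otimes> u) = gconv G a c g"
proof -
  define v where "v = \<omega> u"
  have vQ: "v \<in> Q" unfolding v_def using K_Q[OF kw u] .
  have pu: "\<phi> u = \<chi> v" unfolding v_def using cp[symmetric] compose_apply[OF u] by simp
  have vc: "v \<in> carrier G" "\<chi> v \<in> carrier G" using Qc[OF vQ] K_c[OF kc vQ] by auto
  have uc: "u \<in> carrier G" using Qc[OF u] .
  have hc: "inv (\<phi> u) \<otimes> g \<otimes> u \<in> carrier G" using pu vc uc g by simp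
  have "(\<Sum>y\<in>carrier G. a y * c (inv y \<otimes> (inv (\<phi> u) \<otimes> g \<otimes> u)))
      = (\<Sum>y\<in>carrier G. a (inv (\<chi> v) \<otimes> y \<otimes> v) * c (inv (inv (\<chi> v) \<otimes> y \<otimes> v) \<otimes> (inv (\<phi> u) \<otimes> g \<otimes> u)))"
    by (rule sum.reindex_bij_betw[OF shift_bij[OF inv_closed[OF vc(2)] vc(1)], symmetric])
  also have "\<dots> = (\<Sum>y\<in>carrier G. a y * c (inv y \<otimes> g))"
  proof (rule sum.cong[OF refl])
    fix y assume y: "y \<in> carrier G"
    have e1: "a (inv (\<chi> v) \<otimes> y \<otimes> v) = a y" using a vQ y unfolding fixpts_Delta_iff by blast
    have "inv (inv (\<chi> v) \<otimes> y \<otimes> v) \<otimes> (inv (\<phi> u) \<otimes> g \<otimes> u) = inv (\<omega> u) \<otimes> (inv y \<otimes> g) \<otimes> u"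
      using pu vc uc y g unfolding v_def[symmetric] by (simp add: inv_mult_group m_assoc)
    hence e2: "c (inv (inv (\<chi> v) \<otimes> y \<otimes> v) \<otimes> (inv (\<phi> u) \<otimes> g \<otimes> u)) = c (inv y \<otimes> g)"
      using c u y g unfolding fixpts_Delta_iff by simp
    show "a (inv (\<chi> v) \<otimes> y \<otimes> v) * c (inv (inv (\<chi> v) \<otimes> y \<otimes> v) \<otimes> (inv (\<phi> u) \<otimes> g \<otimes> u))
        = a y * c (inv y \<otimes> g)" using e1 e2 by simp
  qed
  finally show ?thesis unfolding gconv_def using hc g by simp
qed

lemma fam_mult_in: assumes F: "F \<in> br_fam G N Q" and H: "H \<in> br_fam G N Q"
  shows "fam_mult G N Q F H \<in> br_fam G N Q"
  unfolding br_fam_def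
proof (intro CollectI ballI)
  fix \<phi> assume k: "\<phi> \<in> K"
  show "fam_mult G N Q F H \<phi> \<in> fixpts G (Delta \<phi> Q)" unfolding fixpts_Delta_iff
  proof (intro conjI ballI)
    show "fam_mult G N Q F H \<phi> \<in> OG G" unfolding OG_def fam_mult_eq gconv_def by simp
    fix u g assume u: "u \<in> Q" and g: "g \<in> carrier G"
    show "fam_mult G N Q F H \<phi> (inv (\<phi> u) \<otimes> g \<otimes> u) = fam_mult G N Q F H \<phi> g"
      unfolding fam_mult_eq
    proof (rule sum.cong[OF refl])
      fix pr assume pr: "pr \<in> Pairs \<phi>"
      have P: "fst pr \<in> K" "snd pr \<in> K" "compose Q (fst pr) (snd pr) = \<phi>" using pr by auto
      show "gconv G (F (fst pr)) (H (snd pr)) (inv (\<phi> u) \<otimes> g \<otimes> u) = gconv G (F (fst pr)) (H (snd pr)) g"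
        using gconv_fix[OF P _ _ u g] F H P unfolding br_fam_def by blast
    qed
  qed
qed

end



context pbr begin

lemma conj_compose: assumes y: "y \<in> carrier G" and z: "z \<in> carrier G" and kz: "conj_aut G z Q \<in> K"
  shows "compose Q (conj_aut G y Q) (conj_aut G z Q) = conj_aut G (y \<otimes> z) Q"
proof (rule extensionalityI[where A=Q])
  show "compose Q (conj_aut G y Q) (conj_aut G z Q) \<in> extensional Q" by (simp add: compose_def)
  show "conj_aut G (y \<otimes> z) Q \<in> extensional Q" by (rule conj_aut_ext)
  fix u assume u: "u \<in> Q"
  have zu: "conj_aut G z Q u \<in> Q" using K_Q[OF kz u] .
  have "compose Q (conj_aut G y Q) (conj_aut G z Q) u = conj_aut G y Q (conj_aut G z Q u)"
    by (rule compose_apply[OF u])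
  also have "\<dots> = y \<otimes> (conj_aut G z Q u) \<otimes> inv y" by (rule conj_aut_apply[OF zu])
  also have "conj_aut G z Q u = z \<otimes> u \<otimes> inv z" by (rule conj_aut_apply[OF u])
  also have "y \<otimes> (z \<otimes> u \<otimes> inv z) \<otimes> inv y = (y \<otimes> z) \<otimes> u \<otimes> inv (y \<otimes> z)"
    using y z Qc[OF u] by (simp add: inv_mult_group m_assoc)
  also have "\<dots> = conj_aut G (y \<otimes> z) Q u" by (rule conj_aut_apply[OF u, symmetric])
  finally show "compose Q (conj_aut G y Q) (conj_aut G z Q) u = conj_aut G (y \<otimes> z) Q u" .
qed

lemma fixsum_conv: assumes kc: "\<chi> \<in> K" and kw: "\<omega> \<in> K" and x: "x \<in> carrier G"
  and cp: "compose Q \<chi> \<omega> = conj_aut G x Q"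
  and a: "a \<in> fixpts G (Delta \<chi> Q)" and c: "c \<in> fixpts G (Delta \<omega> Q)"
  shows "(\<Sum>y\<in>carrier G. res (a y) * res (c (inv y \<otimes> x)))
       = (\<Sum>y\<in>{y\<in>carrier G. conj_aut G y Q = \<chi>}. res (a y) * res (c (inv y \<otimes> x)))"
proof -
  interpret ga: group_action HQ "carrier G" "act \<chi>" by (rule act_ga[OF kc])
  have inv: "res (a (act \<chi> v y)) * res (c (inv (act \<chi> v y) \<otimes> x)) = res (a y) * res (c (inv y \<otimes> x))"
    if v: "v \<in> carrier HQ" and y: "y \<in> carrier G" for v y
  proof -
    have vQ: "v \<in> Q" using v by simp
    have av: "act \<chi> v y = \<chi> v \<otimes> y \<otimes> inv v" unfolding act_def using y by simp
    obtain u where u: "u \<in> Q" "v = \<omega> u" using K_surj[OF kw] vQ by blast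
    have "conj_aut G x Q u = compose Q \<chi> \<omega> u" using cp by simp
    also have "\<dots> = \<chi> (\<omega> u)" by (rule compose_apply[OF u(1)])
    finally have cv: "\<chi> v = conj_aut G x Q u" using u(2) by simp
    have vc: "v \<in> carrier G" "\<chi> v \<in> carrier G" using Qc[OF vQ] K_c[OF kc vQ] by auto
    have uc: "u \<in> carrier G" using Qc[OF u(1)] .
    have f1: "inv (\<chi> v) \<otimes> x \<otimes> u = x" using fix_pt1[OF x u(1)] cv by simp
    have f2: "inv (\<chi> v) \<otimes> x = x \<otimes> inv u"
    proof -
      have "inv (\<chi> v) \<otimes> x = inv (\<chi> v) \<otimes> x \<otimes> u \<otimes> inv u" using vc uc x by (simp add: m_assoc)
      thus ?thesis using f1 by simp
    qed
    have "inv (\<chi> v \<otimes> y \<otimes> inv v) \<otimes> x = v \<otimes> inv y \<otimes> (inv (\<chi> v) \<otimes> x)"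
      using vc y x by (simp add: inv_mult_group m_assoc)
    also have "\<dots> = \<omega> u \<otimes> (inv y \<otimes> x) \<otimes> inv u" using f2 u(2) vc y x uc by (simp add: m_assoc)
    finally have e: "inv (act \<chi> v y) \<otimes> x = \<omega> u \<otimes> (inv y \<otimes> x) \<otimes> inv u" using av by simp
    have "c (inv (act \<chi> v y) \<otimes> x) = c (inv y \<otimes> x)"
      unfolding e using fix_inv2[OF c kw u(1)] y x by simp
    moreover have "a (act \<chi> v y) = a y" unfolding av using fix_inv2[OF a kc vQ y] .
    ultimately show ?thesis by simp
  qed
  have "(\<Sum>y\<in>carrier G. res (a y) * res (c (inv y \<otimes> x)))
     = (\<Sum>y\<in>{y\<in>carrier G. \<forall>v\<in>carrier HQ. act \<chi> v y = y}. res (a y) * res (c (inv y \<otimes> x)))"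
    by (rule ga.pgroup_fixsum[OF _ _ pp kch finG]) (use finQ Qcard inv in auto)
  also have "{y\<in>carrier G. \<forall>v\<in>carrier HQ. act \<chi> v y = y} = {y\<in>carrier G. conj_aut G y Q = \<chi>}"
  proof (intro Collect_cong conj_cong refl)
    fix y assume y: "y \<in> carrier G"
    show "(\<forall>v\<in>carrier HQ. act \<chi> v y = y) \<longleftrightarrow> conj_aut G y Q = \<chi>"
    proof
      assume h: "\<forall>v\<in>carrier HQ. act \<chi> v y = y"
      show "conj_aut G y Q = \<chi>"
        by (rule fix_pt_conv[OF y K_ext[OF kc] K_c[OF kc]]) (use h y in \<open>auto simp: act_def\<close>)
    next
      assume "conj_aut G y Q = \<chi>"
      thus "\<forall>v\<in>carrier HQ. act \<chi> v y = y" using fix_pt2[OF y] y unfolding act_def by auto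
    qed
  qed
  finally show ?thesis .
qed

lemma coef_mult: assumes F: "F \<in> br_fam G N Q" and H: "H \<in> br_fam G N Q"
  shows "coef res (fam_mult G N Q F H) = kconv G N Q (coef res F) (coef res H)"
proof
  fix x
  show "coef res (fam_mult G N Q F H) x = kconv G N Q (coef res F) (coef res H) x"
  proof (cases "x \<in> NK G N Q")
    case False thus ?thesis unfolding coef_def kconv_def by simp
  next
    case xN: True
    have xc: "x \<in> carrier G" using NK_c[OF xN] .
    define \<phi> where "\<phi> = conj_aut G x Q"
    define cf where "cf = coef res F"
    define ch where "ch = coef res H"
    define S where "S = {y \<in> NK G N Q. inv y \<otimes> x \<in> NK G N Q}"
    define gg where "gg y = (conj_aut G y Q, conj_aut G (inv y \<otimes> x) Q)" for y
    have finS: "finite S" unfolding S_def using finNK by simp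
    have Fa: "F \<chi> \<in> fixpts G (Delta \<chi> Q)" if "\<chi> \<in> K" for \<chi> using F that unfolding br_fam_def by blast
    have Ha: "H \<chi> \<in> fixpts G (Delta \<chi> Q)" if "\<chi> \<in> K" for \<chi> using H that unfolding br_fam_def by blast
    have "coef res (fam_mult G N Q F H) x
        = (\<Sum>pr\<in>Pairs \<phi>. \<Sum>y\<in>carrier G. res (F (fst pr) y) * res (H (snd pr) (inv y \<otimes> x)))"
    proof -
      have "coef res (fam_mult G N Q F H) x = res (\<Sum>pr\<in>Pairs \<phi>. \<Sum>y\<in>carrier G. F (fst pr) y * H (snd pr) (inv y \<otimes> x))"
        unfolding coef_def fam_mult_eq gconv_def \<phi>_def[symmetric] using xN xc by simp
      also have "\<dots> = (\<Sum>pr\<in>Pairs \<phi>. res (\<Sum>y\<in>carrier G. F (fst pr) y * H (snd pr) (inv y \<otimes> x)))"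
        by (rule res_sum[OF resm])
      also have "\<dots> = (\<Sum>pr\<in>Pairs \<phi>. \<Sum>y\<in>carrier G. res (F (fst pr) y * H (snd pr) (inv y \<otimes> x)))"
        by (rule sum.cong[OF refl], rule res_sum[OF resm])
      finally show ?thesis by (simp add: res_mult[OF resm])
    qed
    also have "\<dots> = (\<Sum>pr\<in>Pairs \<phi>. \<Sum>y\<in>{y\<in>carrier G. conj_aut G y Q = fst pr}.
          res (F (fst pr) y) * res (H (snd pr) (inv y \<otimes> x)))"
    proof (rule sum.cong[OF refl])
      fix pr assume pr: "pr \<in> Pairs \<phi>"
      have P: "fst pr \<in> K" "snd pr \<in> K" "compose Q (fst pr) (snd pr) = conj_aut G x Q"
        using pr unfolding \<phi>_def by auto
      show "(\<Sum>y\<in>carrier G. res (F (fst pr) y) * res (H (snd pr) (inv y \<otimes> x)))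
         = (\<Sum>y\<in>{y\<in>carrier G. conj_aut G y Q = fst pr}. res (F (fst pr) y) * res (H (snd pr) (inv y \<otimes> x)))"
        by (rule fixsum_conv[OF P(1) P(2) xc P(3) Fa[OF P(1)] Ha[OF P(2)]])
    qed
    also have "\<dots> = (\<Sum>pr\<in>Pairs \<phi>. \<Sum>y\<in>{y. y \<in> S \<and> gg y = pr}. cf y * ch (inv y \<otimes> x))"
    proof (rule sum.cong[OF refl])
      fix pr assume pr: "pr \<in> Pairs \<phi>"
      obtain \<chi> \<omega> where pe: "pr = (\<chi>, \<omega>)" by (cases pr)
      have P: "\<chi> \<in> K" "\<omega> \<in> K" "compose Q \<chi> \<omega> = conj_aut G x Q"
        using pr pe unfolding \<phi>_def by auto
      have seteq: "{y\<in>carrier G. conj_aut G y Q = \<chi>} = {y. y \<in> S \<and> gg y = pr}"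
      proof (rule Set.set_eqI, rule iffI)
        fix y assume "y \<in> {y\<in>carrier G. conj_aut G y Q = \<chi>}"
        hence y: "y \<in> carrier G" "conj_aut G y Q = \<chi>" by auto
        have yN: "y \<in> NK G N Q" using NK_iff y P(1) by simp
        have cq: "conj_aut G (inv y \<otimes> x) Q = \<omega>" by (rule conj_quot[OF xc y(1) y(2) P(3)[symmetric] P(2)])
        have zN: "inv y \<otimes> x \<in> NK G N Q" using NK_iff cq P(2) y xc by simp
        show "y \<in> {y. y \<in> S \<and> gg y = pr}" unfolding S_def gg_def using yN zN y(2) cq pe by simp
      next
        fix y assume "y \<in> {y. y \<in> S \<and> gg y = pr}"
        hence "y \<in> NK G N Q" "conj_aut G y Q = \<chi>" unfolding S_def gg_def using pe by auto
        thus "y \<in> {y\<in>carrier G. conj_aut G y Q = \<chi>}" using NK_c by auto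
      qed
      show "(\<Sum>y\<in>{y\<in>carrier G. conj_aut G y Q = fst pr}. res (F (fst pr) y) * res (H (snd pr) (inv y \<otimes> x)))
         = (\<Sum>y\<in>{y. y \<in> S \<and> gg y = pr}. cf y * ch (inv y \<otimes> x))"
        unfolding pe fst_conv snd_conv seteq[unfolded pe]
      proof (rule sum.cong[OF refl])
        fix y assume "y \<in> {y. y \<in> S \<and> gg y = (\<chi>, \<omega>)}"
        hence y: "y \<in> NK G N Q" "inv y \<otimes> x \<in> NK G N Q" "conj_aut G y Q = \<chi>" "conj_aut G (inv y \<otimes> x) Q = \<omega>"
          unfolding S_def gg_def by auto
        show "res (F \<chi> y) * res (H \<omega> (inv y \<otimes> x)) = cf y * ch (inv y \<otimes> x)"
          unfolding cf_def ch_def coef_def using y by simp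
      qed
    qed
    also have "\<dots> = (\<Sum>y\<in>S. cf y * ch (inv y \<otimes> x))"
    proof (rule sum.group[OF finS fin_Pairs])
      show "gg ` S \<subseteq> Pairs \<phi>"
      proof
        fix q assume "q \<in> gg ` S"
        then obtain y where y: "y \<in> S" "q = gg y" by blast
        have yN: "y \<in> NK G N Q" and zN: "inv y \<otimes> x \<in> NK G N Q" using y(1) unfolding S_def by auto
        have yc: "y \<in> carrier G" using NK_c[OF yN] .
        have k1: "conj_aut G y Q \<in> K" and k2: "conj_aut G (inv y \<otimes> x) Q \<in> K" using yN zN NK_iff by auto
        have "compose Q (conj_aut G y Q) (conj_aut G (inv y \<otimes> x) Q) = conj_aut G (y \<otimes> (inv y \<otimes> x)) Q"
          by (rule conj_compose[OF yc _ k2]) (use yc xc in simp)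
        also have "y \<otimes> (inv y \<otimes> x) = x" using yc xc by simp
        finally show "q \<in> Pairs \<phi>" unfolding \<phi>_def y(2) gg_def using k1 k2 by simp
      qed
    qed
    also have "\<dots> = (\<Sum>y\<in>NK G N Q. cf y * ch (inv y \<otimes> x))"
    proof (rule sum.mono_neutral_left[OF finNK])
      show "S \<subseteq> NK G N Q" unfolding S_def by blast
      show "\<forall>y\<in>NK G N Q - S. cf y * ch (inv y \<otimes> x) = 0" unfolding S_def ch_def coef_def by auto
    qed
    also have "\<dots> = kconv G N Q (coef res F) (coef res H) x" unfolding kconv_def cf_def ch_def using xN by simp
    finally show ?thesis .
  qed
qed

lemma psi_mult: assumes f: "f \<in> kNK G N Q" and h: "h \<in> kNK G N Q" and F: "F \<in> br_fam G N Q"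
  and H: "H \<in> br_fam G N Q" and e1: "psi f = br_cls G N Q F" and e2: "psi h = br_cls G N Q H"
  shows "psi (kconv G N Q f h) = br_cls G N Q (fam_mult G N Q F H)"
proof -
  have "kconv G N Q f h = coef res (fam_mult G N Q F H)"
    using psi_coef[OF f F e1] psi_coef[OF h H e2] coef_mult[OF F H] by simp
  thus ?thesis using cls_psi[OF fam_mult_in[OF F H]] by simp
qed

end


theorem proposition5p2:
  fixes G :: "('g, 'b) monoid_scheme" and N Q :: "'g set" and p :: nat
    and res :: "'o::idom \<Rightarrow> 'k::field"
  assumes O_cdvr: "complete_dvr TYPE('o)" and O_char0: "CHAR('o) = 0"
    and res: "residue_map res"
    and p: "prime p" and k_char: "CHAR('k) = p"
    and G: "group G" "finite (carrier G)"
    and N: "N \<lhd> G"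
    and Q: "subgroup Q G" "\<exists>n. card Q = p ^ n"
  shows "\<exists>\<psi> :: ('g \<Rightarrow> 'k) \<Rightarrow> (('g \<Rightarrow> 'g) \<Rightarrow> ('g \<Rightarrow> 'o) set).
     \<comment> \<open>bijection of the underlying sets\<close>
     bij_betw \<psi> (kNK G N Q) (ext_brauer G N Q)
     \<comment> \<open>k-linearity (k acting through res : O -> k)\<close>
   \<and> (\<forall>f\<in>kNK G N Q. \<forall>h\<in>kNK G N Q. \<forall>F\<in>br_fam G N Q. \<forall>H\<in>br_fam G N Q.
        \<psi> f = br_cls G N Q F \<longrightarrow> \<psi> h = br_cls G N Q H \<longrightarrow>
          \<psi> (\<lambda>x. f x + h x) = br_cls G N Q (\<lambda>\<phi> g. F \<phi> g + H \<phi> g))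
   \<and> (\<forall>c. \<forall>f\<in>kNK G N Q. \<forall>F\<in>br_fam G N Q.
        \<psi> f = br_cls G N Q F \<longrightarrow>
          \<psi> (\<lambda>x. res c * f x) = br_cls G N Q (\<lambda>\<phi> g. c * F \<phi> g))
     \<comment> \<open>multiplicativity\<close>
   \<and> (\<forall>f\<in>kNK G N Q. \<forall>h\<in>kNK G N Q. \<forall>F\<in>br_fam G N Q. \<forall>H\<in>br_fam G N Q.
        \<psi> f = br_cls G N Q F \<longrightarrow> \<psi> h = br_cls G N Q H \<longrightarrow>
          \<psi> (kconv G N Q f h) = br_cls G N Q (fam_mult G N Q F H))
     \<comment> \<open>compatibility with the N_G^K(Q)/C_N(Q)-gradings\<close>
   \<and> (\<forall>z\<in>NK G N Q. \<psi> ` kNK_comp G N Q z = ext_brauer_comp G N Q z)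
     \<comment> \<open>compatibility with the N_G^K(Q)-interior structures\<close>
   \<and> (\<forall>x\<in>NK G N Q. \<psi> (gdelta x) =
        br_cls G N Q (\<lambda>\<phi>. if \<phi> = conj_aut G x Q then gdelta x else (\<lambda>_. 0)))
     \<comment> \<open>compatibility with the N_G(Q)-actions\<close>
   \<and> (\<forall>y\<in>normalizer G Q. \<forall>f\<in>kNK G N Q. \<forall>F\<in>br_fam G N Q.
        \<psi> f = br_cls G N Q F \<longrightarrow>
          \<psi> (kact G N Q y f) = br_cls G N Q (fam_act G Q y F))"
proof -
  obtain n where n: "card Q = p ^ n" using Q(2) by blast
  interpret pbr G N Q p n res
    using G(1) G(2) N Q(1) n p res k_char
    by (simp add: pbr_def pb_def pb_axioms_def pbr_axioms_def)
  show ?thesis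
  proof (rule exI[where x=psi], intro conjI)
    show "bij_betw psi (kNK G N Q) (ext_brauer G N Q)" by (rule psi_bij)
    show "\<forall>f\<in>kNK G N Q. \<forall>h\<in>kNK G N Q. \<forall>F\<in>br_fam G N Q. \<forall>H\<in>br_fam G N Q.
        psi f = br_cls G N Q F \<longrightarrow> psi h = br_cls G N Q H \<longrightarrow>
          psi (\<lambda>x. f x + h x) = br_cls G N Q (\<lambda>\<phi> g. F \<phi> g + H \<phi> g)"
      using psi_add by blast
    show "\<forall>c. \<forall>f\<in>kNK G N Q. \<forall>F\<in>br_fam G N Q.
        psi f = br_cls G N Q F \<longrightarrow>
          psi (\<lambda>x. res c * f x) = br_cls G N Q (\<lambda>\<phi> g. c * F \<phi> g)"
      using psi_scal by blast
    show "\<forall>f\<in>kNK G N Q. \<forall>h\<in>kNK G N Q. \<forall>F\<in>br_fam G N Q. \<forall>H\<in>br_fam G N Q.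
        psi f = br_cls G N Q F \<longrightarrow> psi h = br_cls G N Q H \<longrightarrow>
          psi (kconv G N Q f h) = br_cls G N Q (fam_mult G N Q F H)"
      using psi_mult by blast
    show "\<forall>z\<in>NK G N Q. psi ` kNK_comp G N Q z = ext_brauer_comp G N Q z"
      using psi_grade by blast
    show "\<forall>x\<in>NK G N Q. psi (gdelta x) =
        br_cls G N Q (\<lambda>\<phi>. if \<phi> = conj_aut G x Q then gdelta x else (\<lambda>_. 0))"
      using psi_delta by blast
    show "\<forall>y\<in>normalizer G Q. \<forall>f\<in>kNK G N Q. \<forall>F\<in>br_fam G N Q.
        psi f = br_cls G N Q F \<longrightarrow>
          psi (kact G N Q y f) = br_cls G N Q (fam_act G Q y F)"
      using psi_act by blast
  qed
qed

end
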